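(* For all $d\in\mathbb{Z}_{++}$, if the data are generated by the logistic regression process, then for all $T\in\mathbb{Z}_{++}$, $$\mathcal{L}_T\le\frac{d}{2T}\Big(1+\ln\Big(1+\frac{T}{4d}\Big)\Big).$$
   Context: Logistic regression process: $\theta\sim\mathcal{N}(0,I_d/d)$. The inputs $X_t$, $t\in\mathbb{Z}_+$, are i.i.d. $\mathcal{N}(0,I_d)$ and independent of $\theta$. Conditionally on $(\theta,X_0,Y_1,\ldots,X_t)$, the label $Y_{t+1}\in\{0,1\}$ equals $1$ with probability $1/(1+e^{-\theta^\top X_t})$, independently across $t$ given $\theta$ and the inputs. The history is $H_t=(X_0,Y_1,\ldots,Y_t,X_t)$. The optimal estimation error is $$\mathcal{L}_T=\frac1T\sum_{t=0}^{T-1}\mathbb{E}\big[\mathrm{d}_{\mathrm{KL}}(\mathbb{P}(Y_{t+1}\in\cdot\mid\theta,H_t)\,\|\,\mathbb{P}(Y_{t+1}\in\cdot\mid H_t))\big].$$ *)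

theory Defs
  imports "HOL-Probability.Probability"
begin

definition sigmoid :: "real \<Rightarrow> real" where
  "sigmoid z = 1 / (1 + exp (- z))"

text \<open>Prior of theta on R^d (d = CARD('d)): N(0, I_d/d), i.e. i.i.d. coordinates
  with standard deviation 1/sqrt d.\<close>
definition theta_prior :: "'d itself \<Rightarrow> (real^'d::finite) measure" where
  "theta_prior _ = density lborel
     (\<lambda>\<theta>. ennreal (\<Prod>i\<in>UNIV. normal_density 0 (1 / sqrt (real CARD('d))) (\<theta> $ i)))"

definition input_law :: "'d itself \<Rightarrow> (real^'d::finite) measure" where
  "input_law _ = density lborel (\<lambda>x. ennreal (\<Prod>i\<in>UNIV. std_normal_density (x $ i)))"

definition inputs_law :: "'d itself \<Rightarrow> nat \<Rightarrow> (nat \<Rightarrow> real^'d::finite) measure" where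
  "inputs_law D t = PiM {..t} (\<lambda>_. input_law D)"

text \<open>P(Y_{s+1} = b | theta, X_s = x).\<close>
definition label_prob :: "real^'d::finite \<Rightarrow> real^'d \<Rightarrow> bool \<Rightarrow> real" where
  "label_prob \<theta> x b = (if b then sigmoid (\<theta> \<bullet> x) else 1 - sigmoid (\<theta> \<bullet> x))"

text \<open>Likelihood of labels ys (ys ! s = Y_{s+1}, s < length ys) given theta and inputs xs.\<close>
definition likelihood :: "real^'d::finite \<Rightarrow> (nat \<Rightarrow> real^'d) \<Rightarrow> bool list \<Rightarrow> real" where
  "likelihood \<theta> xs ys = (\<Prod>s<length ys. label_prob \<theta> (xs s) (ys ! s))"

text \<open>Bayesian predictive probability P(Y_{t+1} = 1 | H_t), H_t = (X_0,Y_1,...,Y_t,X_t),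
  with t = length ys (Bayes' rule; the input densities cancel).\<close>
definition predictive :: "('d::finite) itself \<Rightarrow> (nat \<Rightarrow> real^'d) \<Rightarrow> bool list \<Rightarrow> real" where
  "predictive D xs ys =
     (\<integral>\<theta>. likelihood \<theta> xs ys * sigmoid (\<theta> \<bullet> xs (length ys)) \<partial>theta_prior D) /
     (\<integral>\<theta>. likelihood \<theta> xs ys \<partial>theta_prior D)"

definition kl_bern :: "real \<Rightarrow> real \<Rightarrow> real" where
  "kl_bern p q = p * ln (p / q) + (1 - p) * ln ((1 - p) / (1 - q))"

text \<open>E[ d_KL(P(Y_{t+1} \<in> . | theta, H_t) || P(Y_{t+1} \<in> . | H_t)) ], expectation over
  the joint law of (theta, X_0..X_t, Y_1..Y_t).\<close>
definition expected_kl :: "('d::finite) itself \<Rightarrow> nat \<Rightarrow> ennreal" where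
  "expected_kl D t =
     (\<integral>\<^sup>+\<theta>. (\<integral>\<^sup>+xs. (\<Sum>ys\<in>{ys :: bool list. length ys = t}.
        ennreal (likelihood \<theta> xs ys *
                 kl_bern (sigmoid (\<theta> \<bullet> xs t)) (predictive D xs ys)))
      \<partial>inputs_law D t) \<partial>theta_prior D)"

definition estimation_error :: "('d::finite) itself \<Rightarrow> nat \<Rightarrow> ennreal" where
  "estimation_error D T = ennreal (1 / real T) * (\<Sum>t<T. expected_kl D t)"

end

theory Submission
  imports Defs
begin

lemma Basis_vec_real: "(Basis :: (real^'n) set) = range (\<lambda>i. axis i 1)"
  unfolding Basis_vec_def by auto

lemma measurable_vec_lambda_PiM[measurable]:
  "(\<lambda>f. vec_lambda f :: real^'n) \<in> PiM UNIV (\<lambda>_. borel) \<rightarrow>\<^sub>M borel"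
proof (subst borel_measurable_euclidean_space, intro ballI)
  fix b :: "real^'n" assume "b \<in> Basis"
  then obtain j where b: "b = axis j 1" by (auto simp: Basis_vec_real)
  show "(\<lambda>f. vec_lambda f \<bullet> b) \<in> borel_measurable (PiM UNIV (\<lambda>_. borel))"
    unfolding b inner_axis by simp
qed

lemma lborel_vec: "(lborel :: (real^'n) measure) = distr (PiM UNIV (\<lambda>_. lborel)) borel (\<lambda>f. vec_lambda f)"
proof (rule lborel_eqI)
  fix l u :: "real^'n" assume le: "\<And>b. b \<in> Basis \<Longrightarrow> l \<bullet> b \<le> u \<bullet> b"
  have le': "l $ i \<le> u $ i" for i using le[of "axis i 1"] by (simp add: Basis_vec_real inner_axis)
  have m: "(\<lambda>f. vec_lambda f :: real^'n) \<in> PiM UNIV (\<lambda>_. lborel) \<rightarrow>\<^sub>M borel"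
    using measurable_vec_lambda_PiM by (simp cong: measurable_cong_sets)
  have "(\<lambda>f. vec_lambda f) -` box l u \<inter> space (PiM UNIV (\<lambda>_. lborel)) = PiE UNIV (\<lambda>i. {l$i <..< u$i})"
    by (auto simp: box_def Basis_vec_real inner_axis space_PiM PiE_def extensional_def)
  then have "emeasure (distr (PiM UNIV (\<lambda>_. lborel)) borel (\<lambda>f. vec_lambda f)) (box l u)
      = emeasure (PiM UNIV (\<lambda>_. lborel)) (PiE UNIV (\<lambda>i. {l$i <..< u$i}))"
    using m by (simp add: emeasure_distr)
  also have "\<dots> = (\<Prod>i\<in>UNIV. emeasure lborel {l$i <..< u$i})"
  proof -
    interpret product_sigma_finite "\<lambda>_::'n. lborel :: real measure" by standard
    show ?thesis by (rule emeasure_PiM) auto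
  qed
  also have "\<dots> = (\<Prod>i\<in>UNIV. ennreal (u$i - l$i))"
    using le' by simp
  also have "\<dots> = ennreal (\<Prod>i\<in>UNIV. (u$i - l$i))"
    using le' by (simp add: prod_ennreal)
  also have "(\<Prod>i\<in>UNIV. (u$i - l$i)) = (\<Prod>b\<in>Basis. (u - l) \<bullet> b)"
    unfolding Basis_vec_real
    by (subst prod.reindex) (auto simp: inj_on_def axis_eq_axis inner_axis)
  finally show "emeasure (distr (PiM UNIV (\<lambda>_. lborel)) borel (\<lambda>f. vec_lambda f)) (box l u) = (\<Prod>b\<in>Basis. (u - l) \<bullet> b)"
    by (simp add: prod_nonneg)
qed simp

lemma borel_measurable_vec_nth[measurable (raw)]:
  fixes f :: "'a \<Rightarrow> real^'n"
  assumes "f \<in> borel_measurable M"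
  shows "(\<lambda>x. f x $ i) \<in> borel_measurable M"
proof -
  have "(\<lambda>x. f x \<bullet> axis i 1) \<in> borel_measurable M" using assms by measurable
  then show ?thesis by (simp add: inner_axis)
qed

definition N1 :: "real \<Rightarrow> real \<Rightarrow> real measure" where
  "N1 \<mu> \<sigma> = density lborel (normal_density \<mu> \<sigma>)"

definition gvec :: "real^'n \<Rightarrow> real \<Rightarrow> (real^'n) measure" where
  "gvec m \<sigma> = density lborel (\<lambda>x. ennreal (\<Prod>i\<in>UNIV. normal_density (m$i) \<sigma> (x$i)))"

lemma sets_N1[simp, measurable_cong]: "sets (N1 \<mu> \<sigma>) = sets borel"
  by (simp add: N1_def)

lemma space_N1[simp]: "space (N1 \<mu> \<sigma>) = UNIV"
  by (simp add: N1_def)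

lemma sets_gvec[simp, measurable_cong]: "sets (gvec m \<sigma>) = sets borel"
  by (simp add: gvec_def)

lemma space_gvec[simp]: "space (gvec m \<sigma>) = UNIV"
  by (simp add: gvec_def)

lemma prob_space_N1: "0 < \<sigma> \<Longrightarrow> prob_space (N1 \<mu> \<sigma>)"
  unfolding N1_def by (rule prob_space_normal_density)

lemma N1_integrable_iff:
  fixes f :: "real \<Rightarrow> real"
  assumes [measurable]: "f \<in> borel_measurable borel"
  shows "integrable (N1 \<mu> \<sigma>) f \<longleftrightarrow> integrable lborel (\<lambda>x. normal_density \<mu> \<sigma> x * f x)"
  unfolding N1_def by (subst integrable_density) auto

lemma N1_integral:
  fixes f :: "real \<Rightarrow> real"
  assumes [measurable]: "f \<in> borel_measurable borel"
  shows "integral\<^sup>L (N1 \<mu> \<sigma>) f = (\<integral>x. normal_density \<mu> \<sigma> x * f x \<partial>lborel)"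
  unfolding N1_def by (subst integral_density) auto

lemma N1_int_pow: "0 < \<sigma> \<Longrightarrow> integrable (N1 \<mu> \<sigma>) (\<lambda>x. (x - \<mu>)^k)"
  by (subst N1_integrable_iff) (auto intro: integrable_normal_moment)

lemma N1_int_1: "0 < \<sigma> \<Longrightarrow> integrable (N1 \<mu> \<sigma>) (\<lambda>x. x - \<mu>)"
  using N1_int_pow[of \<sigma> \<mu> 1] by simp

lemma N1_int_const: "0 < \<sigma> \<Longrightarrow> integrable (N1 \<mu> \<sigma>) (\<lambda>x. c)"
  using finite_measure.integrable_const[OF prob_space.finite_measure[OF prob_space_N1]] by blast

lemma N1_mom1: "0 < \<sigma> \<Longrightarrow> integral\<^sup>L (N1 \<mu> \<sigma>) (\<lambda>x. x - \<mu>) = 0"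
  using integral_normal_moment_odd[of \<sigma> \<mu> 0] by (subst N1_integral) auto

lemma N1_mom2: "0 < \<sigma> \<Longrightarrow> integral\<^sup>L (N1 \<mu> \<sigma>) (\<lambda>x. (x - \<mu>)^2) = \<sigma>^2"
  using integral_normal_moment_even[of \<sigma> \<mu> 1] by (subst N1_integral) (auto simp: power2_eq_square)

lemma N1_mom0: "0 < \<sigma> \<Longrightarrow> integral\<^sup>L (N1 \<mu> \<sigma>) (\<lambda>x. 1) = (1::real)"
proof -
  assume s: "0 < \<sigma>"
  have "integral\<^sup>L (N1 \<mu> \<sigma>) (\<lambda>x. 1::real) = measure (N1 \<mu> \<sigma>) (space (N1 \<mu> \<sigma>)) *\<^sub>R 1"
    by (rule lebesgue_integral_const)
  then show ?thesis using prob_space.prob_space[OF prob_space_N1[OF s]] by simp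
qed

lemma gvec_eq:
  fixes m :: "real^'n"
  assumes "0 < \<sigma>"
  shows "gvec m \<sigma> = distr (PiM UNIV (\<lambda>i. N1 (m$i) \<sigma>)) borel vec_lambda"
proof -
  interpret P0: product_sigma_finite "\<lambda>_::'n. lborel :: real measure" by standard
  interpret P1: product_sigma_finite "\<lambda>i::'n. N1 (m$i) \<sigma>"
    unfolding product_sigma_finite_def using prob_space_N1[OF assms] by (simp add: prob_space_imp_sigma_finite)
  have mv: "(vec_lambda :: ('n \<Rightarrow> real) \<Rightarrow> real^'n) \<in> PiM UNIV (\<lambda>_. lborel) \<rightarrow>\<^sub>M borel"
    using measurable_vec_lambda_PiM by (simp cong: measurable_cong_sets)
  have "gvec m \<sigma> = density (distr (PiM UNIV (\<lambda>_. lborel)) borel vec_lambda)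
          (\<lambda>x. ennreal (\<Prod>i\<in>UNIV. normal_density (m$i) \<sigma> (x$i)))"
    unfolding gvec_def by (subst lborel_vec) simp
  also have "\<dots> = distr (density (PiM UNIV (\<lambda>_. lborel))
          (\<lambda>f. ennreal (\<Prod>i\<in>UNIV. normal_density (m$i) \<sigma> (f i)))) borel vec_lambda"
    by (subst density_distr[OF _ mv]) auto
  also have "density (PiM UNIV (\<lambda>_. lborel)) (\<lambda>f. ennreal (\<Prod>i\<in>UNIV. normal_density (m$i) \<sigma> (f i)))
      = PiM UNIV (\<lambda>i. N1 (m$i) \<sigma>)"
  proof (rule P1.PiM_eqI)
    show "sets (density (PiM UNIV (\<lambda>_. lborel)) (\<lambda>f. ennreal (\<Prod>i\<in>UNIV. normal_density (m$i) \<sigma> (f i))))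
      = sets (PiM UNIV (\<lambda>i. N1 (m$i) \<sigma>))"
      by (auto intro!: sets_PiM_cong simp: N1_def)
  next
    fix A :: "'n \<Rightarrow> real set" assume A: "\<And>i. i \<in> UNIV \<Longrightarrow> A i \<in> sets (N1 (m$i) \<sigma>)"
    then have A'[measurable]: "\<And>i. A i \<in> sets borel" by simp
    have "emeasure (density (PiM UNIV (\<lambda>_. lborel)) (\<lambda>f. ennreal (\<Prod>i\<in>UNIV. normal_density (m$i) \<sigma> (f i)))) (PiE UNIV A)
       = (\<integral>\<^sup>+f. (\<Prod>i\<in>UNIV. ennreal (normal_density (m$i) \<sigma> (f i)) * indicator (A i) (f i)) \<partial>PiM UNIV (\<lambda>_. lborel))"
    proof (subst emeasure_density)
      show "PiE UNIV A \<in> sets (PiM UNIV (\<lambda>_. lborel))"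
        by (rule sets_PiM_I_finite) auto
      show "(\<integral>\<^sup>+ x. ennreal (\<Prod>i\<in>UNIV. normal_density (m $ i) \<sigma> (x i)) * indicator (PiE UNIV A) x \<partial>PiM UNIV (\<lambda>_. lborel))
        = (\<integral>\<^sup>+f. (\<Prod>i\<in>UNIV. ennreal (normal_density (m$i) \<sigma> (f i)) * indicator (A i) (f i)) \<partial>PiM UNIV (\<lambda>_. lborel))"
        by (intro nn_integral_cong)
          (auto simp: prod_ennreal prod.distrib indicator_def PiE_def space_PiM extensional_def Pi_iff)
    qed auto
    also have "\<dots> = (\<Prod>i\<in>UNIV. \<integral>\<^sup>+t. ennreal (normal_density (m$i) \<sigma> t) * indicator (A i) t \<partial>lborel)"
      by (rule P0.product_nn_integral_prod) auto
    also have "\<dots> = (\<Prod>i\<in>UNIV. emeasure (N1 (m$i) \<sigma>) (A i))"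
      by (auto simp: N1_def emeasure_density intro!: prod.cong)
    finally show "emeasure (density (PiM UNIV (\<lambda>_. lborel)) (\<lambda>f. ennreal (\<Prod>i\<in>UNIV. normal_density (m$i) \<sigma> (f i)))) (PiE UNIV A)
      = (\<Prod>i\<in>UNIV. emeasure (N1 (m$i) \<sigma>) (A i))" .
  qed auto
  finally show ?thesis .
qed

lemma prob_space_gvec: "0 < \<sigma> \<Longrightarrow> prob_space (gvec (m::real^'n) \<sigma>)"
proof -
  assume s: "0 < \<sigma>"
  interpret P1: product_prob_space "\<lambda>i::'n. N1 (m$i) \<sigma>" UNIV
    unfolding product_prob_space_def product_prob_space_axioms_def product_sigma_finite_def
    using prob_space_N1[OF s] by (simp add: prob_space_imp_sigma_finite)
  show ?thesis unfolding gvec_eq[OF s]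
    by (rule P1.prob_space_distr) (simp cong: measurable_cong_sets)
qed

lemma measurable_vec_lambda_N1[measurable]:
  "(vec_lambda :: ('n \<Rightarrow> real) \<Rightarrow> real^'n) \<in> PiM UNIV (\<lambda>i. N1 (m$i) \<sigma>) \<rightarrow>\<^sub>M borel"
  using measurable_vec_lambda_PiM by (simp cong: measurable_cong_sets)

lemma gvec_prod:
  fixes m :: "real^'n" and f :: "'n \<Rightarrow> real \<Rightarrow> real"
  assumes s: "0 < \<sigma>" and int: "\<And>k. integrable (N1 (m$k) \<sigma>) (f k)"
  shows "integrable (gvec m \<sigma>) (\<lambda>x. \<Prod>k\<in>UNIV. f k (x$k))"
    and "integral\<^sup>L (gvec m \<sigma>) (\<lambda>x. \<Prod>k\<in>UNIV. f k (x$k)) = (\<Prod>k\<in>UNIV. integral\<^sup>L (N1 (m$k) \<sigma>) (f k))"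
proof -
  interpret P1: product_sigma_finite "\<lambda>i::'n. N1 (m$i) \<sigma>"
    unfolding product_sigma_finite_def using prob_space_N1[OF s] by (simp add: prob_space_imp_sigma_finite)
  have fm[measurable]: "f k \<in> borel_measurable borel" for k
    using borel_measurable_integrable[OF int[of k]] by (simp cong: measurable_cong_sets)
  have m: "(\<lambda>x::real^'n. \<Prod>k\<in>UNIV. f k (x$k)) \<in> borel_measurable borel" by measurable
  show "integrable (gvec m \<sigma>) (\<lambda>x. \<Prod>k\<in>UNIV. f k (x$k))"
    unfolding gvec_eq[OF s]
    by (subst integrable_distr_eq[OF measurable_vec_lambda_N1 m])
       (simp add: P1.product_integrable_prod int)
  show "integral\<^sup>L (gvec m \<sigma>) (\<lambda>x. \<Prod>k\<in>UNIV. f k (x$k)) = (\<Prod>k\<in>UNIV. integral\<^sup>L (N1 (m$k) \<sigma>) (f k))"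
    unfolding gvec_eq[OF s]
    by (subst integral_distr[OF measurable_vec_lambda_N1 m])
       (simp add: P1.product_integral_prod int)
qed

lemma prod_delta1: "(\<Prod>k\<in>(UNIV::'n::finite set). if k = i then g (x k) else (1::real)) = g (x i)"
  by (subst prod.delta) auto

lemma prod_delta2:
  assumes "i \<noteq> j"
  shows "(\<Prod>k\<in>(UNIV::'n::finite set). if k = i then g (x k) else if k = j then h (x k) else (1::real)) = g (x i) * h (x j)"
proof -
  have "(\<Prod>k\<in>(UNIV::'n::finite set). if k = i then g (x k) else if k = j then h (x k) else (1::real))
      = (\<Prod>k\<in>UNIV. (if k = i then g (x k) else 1) * (if k = j then h (x k) else 1))"
    using assms by (intro prod.cong) auto
  also have "\<dots> = g (x i) * h (x j)"
    by (simp add: prod.distrib prod.delta)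
  finally show ?thesis .
qed

lemma N1_measure_UNIV: "0 < \<sigma> \<Longrightarrow> measure (N1 \<mu> \<sigma>) UNIV = 1"
  using prob_space.prob_space[OF prob_space_N1] by fastforce

context
  fixes m :: "real^'n" and \<sigma> :: real
  assumes s: "0 < \<sigma>"
begin

lemma gvec_single:
  fixes g :: "real \<Rightarrow> real"
  assumes "integrable (N1 (m$i) \<sigma>) g"
  shows "integrable (gvec m \<sigma>) (\<lambda>x. g (x$i))" "integral\<^sup>L (gvec m \<sigma>) (\<lambda>x. g (x$i)) = integral\<^sup>L (N1 (m$i) \<sigma>) g"
proof -
  let ?f = "\<lambda>k. if k = i then g else (\<lambda>_. 1)"
  have int: "integrable (N1 (m$k) \<sigma>) (?f k)" for k
    using assms N1_int_const[OF s] by auto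
  have eq: "(\<lambda>x::real^'n. \<Prod>k\<in>UNIV. ?f k (x$k)) = (\<lambda>x. g (x$i))"
  proof
    fix x :: "real^'n"
    have "(\<Prod>k\<in>UNIV. ?f k (x$k)) = (\<Prod>k\<in>UNIV. if k = i then g (x$k) else 1)"
      by (intro prod.cong) auto
    then show "(\<Prod>k\<in>UNIV. ?f k (x$k)) = g (x$i)"
      using prod_delta1[of i g "\<lambda>k. x$k"] by simp
  qed
  show "integrable (gvec m \<sigma>) (\<lambda>x. g (x$i))" using gvec_prod(1)[OF s int] unfolding eq .
  have "integral\<^sup>L (gvec m \<sigma>) (\<lambda>x. g (x$i)) = (\<Prod>k\<in>UNIV. integral\<^sup>L (N1 (m$k) \<sigma>) (?f k))"
    using gvec_prod(2)[OF s int] unfolding eq .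
  also have "\<dots> = (\<Prod>k\<in>UNIV. if k = i then integral\<^sup>L (N1 (m$i) \<sigma>) g else 1)"
    by (intro prod.cong) (auto simp: N1_mom0[OF s] N1_measure_UNIV[OF s])
  also have "\<dots> = integral\<^sup>L (N1 (m$i) \<sigma>) g" by (subst prod.delta) auto
  finally show "integral\<^sup>L (gvec m \<sigma>) (\<lambda>x. g (x$i)) = integral\<^sup>L (N1 (m$i) \<sigma>) g" .
qed

lemma gvec_pair:
  fixes g h :: "real \<Rightarrow> real"
  assumes "i \<noteq> j" "integrable (N1 (m$i) \<sigma>) g" "integrable (N1 (m$j) \<sigma>) h"
  shows "integrable (gvec m \<sigma>) (\<lambda>x. g (x$i) * h (x$j))"
    "integral\<^sup>L (gvec m \<sigma>) (\<lambda>x. g (x$i) * h (x$j)) = integral\<^sup>L (N1 (m$i) \<sigma>) g * integral\<^sup>L (N1 (m$j) \<sigma>) h"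
proof -
  let ?f = "\<lambda>k. if k = i then g else if k = j then h else (\<lambda>_. 1)"
  have int: "integrable (N1 (m$k) \<sigma>) (?f k)" for k
    using assms N1_int_const[OF s] by auto
  have eq: "(\<lambda>x::real^'n. \<Prod>k\<in>UNIV. ?f k (x$k)) = (\<lambda>x. g (x$i) * h (x$j))"
  proof
    fix x :: "real^'n"
    have "(\<Prod>k\<in>UNIV. ?f k (x$k)) = (\<Prod>k\<in>UNIV. if k = i then g (x$k) else if k = j then h (x$k) else 1)"
      by (intro prod.cong) auto
    then show "(\<Prod>k\<in>UNIV. ?f k (x$k)) = g (x$i) * h (x$j)"
      using prod_delta2[OF assms(1), of g "\<lambda>k. x$k" h] by simp
  qed
  show "integrable (gvec m \<sigma>) (\<lambda>x. g (x$i) * h (x$j))" using gvec_prod(1)[OF s int] unfolding eq .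
  have "integral\<^sup>L (gvec m \<sigma>) (\<lambda>x. g (x$i) * h (x$j)) = (\<Prod>k\<in>UNIV. integral\<^sup>L (N1 (m$k) \<sigma>) (?f k))"
    using gvec_prod(2)[OF s int] unfolding eq .
  also have "\<dots> = (\<Prod>k\<in>UNIV. if k = i then integral\<^sup>L (N1 (m$i) \<sigma>) g
       else if k = j then integral\<^sup>L (N1 (m$j) \<sigma>) h else 1)"
    by (intro prod.cong) (auto simp: N1_mom0[OF s] N1_measure_UNIV[OF s])
  also have "\<dots> = integral\<^sup>L (N1 (m$i) \<sigma>) g * integral\<^sup>L (N1 (m$j) \<sigma>) h"
    using prod_delta2[OF assms(1), of "\<lambda>_. integral\<^sup>L (N1 (m$i) \<sigma>) g" "\<lambda>_. 0" "\<lambda>_. integral\<^sup>L (N1 (m$j) \<sigma>) h"]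
    by simp
  finally show "integral\<^sup>L (gvec m \<sigma>) (\<lambda>x. g (x$i) * h (x$j)) = integral\<^sup>L (N1 (m$i) \<sigma>) g * integral\<^sup>L (N1 (m$j) \<sigma>) h" .
qed

lemma gvec_c1: "integrable (gvec m \<sigma>) (\<lambda>x. x$i - m$i)" "integral\<^sup>L (gvec m \<sigma>) (\<lambda>x. x$i - m$i) = 0"
  using gvec_single[OF N1_int_1[OF s, of "m$i"]] N1_mom1[OF s] by auto

lemma gvec_c2: "integrable (gvec m \<sigma>) (\<lambda>x. (x$i - m$i)^2)" "integral\<^sup>L (gvec m \<sigma>) (\<lambda>x. (x$i - m$i)^2) = \<sigma>^2"
  using gvec_single[OF N1_int_pow[OF s, of "m$i" 2]] N1_mom2[OF s] by auto

lemma gvec_cc: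
  assumes "i \<noteq> j"
  shows "integrable (gvec m \<sigma>) (\<lambda>x. (x$i - m$i) * (x$j - m$j))"
    "integral\<^sup>L (gvec m \<sigma>) (\<lambda>x. (x$i - m$i) * (x$j - m$j)) = 0"
  using gvec_pair[OF assms N1_int_1[OF s, of "m$i"] N1_int_1[OF s, of "m$j"]] N1_mom1[OF s] by auto

lemma gvec_prob: "prob_space (gvec m \<sigma>)"
  by (rule prob_space_gvec[OF s])

lemma gvec_const: "integrable (gvec m \<sigma>) (\<lambda>x. c)" "integral\<^sup>L (gvec m \<sigma>) (\<lambda>x. c) = (c::real)"
proof -
  interpret prob_space "gvec m \<sigma>" by (rule gvec_prob)
  show "integrable (gvec m \<sigma>) (\<lambda>x. c)" by simp
  show "integral\<^sup>L (gvec m \<sigma>) (\<lambda>x. c) = (c::real)" using prob_space by simp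
qed

lemma gvec_cross: "integrable (gvec m \<sigma>) (\<lambda>x. (x$i - m$i) * (x$j - m$j))"
  "integral\<^sup>L (gvec m \<sigma>) (\<lambda>x. (x$i - m$i) * (x$j - m$j)) = (if i = j then \<sigma>^2 else 0)"
  using gvec_cc[of i j] gvec_c2[of i] by (auto simp: power2_eq_square)

lemma gvec_quad:
  "integrable (gvec m \<sigma>) (\<lambda>x. (\<Sum>i\<in>UNIV. a i * (x$i - m$i))^2)"
  "integral\<^sup>L (gvec m \<sigma>) (\<lambda>x. (\<Sum>i\<in>UNIV. a i * (x$i - m$i))^2) = \<sigma>^2 * (\<Sum>i\<in>UNIV. (a i)^2)"
proof -
  have eq: "(\<lambda>x. (\<Sum>i\<in>UNIV. a i * (x$i - m$i))^2)
     = (\<lambda>x. \<Sum>i\<in>UNIV. \<Sum>j\<in>UNIV. a i * a j * ((x$i - m$i) * (x$j - m$j)))"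
    by (auto simp: power2_eq_square sum_product algebra_simps)
  have int: "integrable (gvec m \<sigma>) (\<lambda>x. a i * a j * ((x$i - m$i) * (x$j - m$j)))" for i j
    using gvec_cross(1)[of i j] by simp
  show "integrable (gvec m \<sigma>) (\<lambda>x. (\<Sum>i\<in>UNIV. a i * (x$i - m$i))^2)"
    unfolding eq using int by auto
  have "integral\<^sup>L (gvec m \<sigma>) (\<lambda>x. (\<Sum>i\<in>UNIV. a i * (x$i - m$i))^2)
     = (\<Sum>i\<in>UNIV. \<Sum>j\<in>UNIV. a i * a j * (if i = j then \<sigma>^2 else 0))"
    unfolding eq using int gvec_cross(2)
    by (simp add: integral_sum integrable_sum)
  also have "\<dots> = \<sigma>^2 * (\<Sum>i\<in>UNIV. (a i)^2)"
    by (simp add: if_distrib sum_distrib_left power2_eq_square mult.commute cong: if_cong)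
  finally show "integral\<^sup>L (gvec m \<sigma>) (\<lambda>x. (\<Sum>i\<in>UNIV. a i * (x$i - m$i))^2) = \<sigma>^2 * (\<Sum>i\<in>UNIV. (a i)^2)" .
qed

lemma gvec_sq:
  "integrable (gvec m \<sigma>) (\<lambda>x. \<Sum>i\<in>UNIV. (x$i - m$i)^2)"
  "integral\<^sup>L (gvec m \<sigma>) (\<lambda>x. \<Sum>i\<in>UNIV. (x$i - m$i)^2) = real CARD('n) * \<sigma>^2"
  using gvec_c2 by (auto simp: integral_sum)

lemma gvec_integrable_bound:
  fixes f :: "real^'n \<Rightarrow> real"
  assumes [measurable]: "f \<in> borel_measurable borel"
    and b: "\<And>x. \<bar>f x\<bar> \<le> c0 + c1 * (\<Sum>i\<in>UNIV. (x$i - m$i)^2)"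
  shows "integrable (gvec m \<sigma>) f"
proof (rule Bochner_Integration.integrable_bound)
  show "integrable (gvec m \<sigma>) (\<lambda>x. c0 + c1 * (\<Sum>i\<in>UNIV. (x$i - m$i)^2))"
    by (rule Bochner_Integration.integrable_add[OF gvec_const(1) integrable_mult_right[OF gvec_sq(1)]])
  show "f \<in> borel_measurable (gvec m \<sigma>)" by (simp cong: measurable_cong_sets)
  show "AE x in gvec m \<sigma>. norm (f x) \<le> norm (c0 + c1 * (\<Sum>i\<in>UNIV. (x$i - m$i)^2))"
    using b by (auto intro!: AE_I2 order_trans[OF _ abs_ge_self])
qed

end

section \<open>Sigmoid facts\<close>

lemma sigmoid_pos: "0 < sigmoid z"
  by (simp add: sigmoid_def add_pos_pos)


lemma one_minus_sigmoid: "1 - sigmoid z = sigmoid (- z)"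
proof -
  have "1 + exp (- z) > 0" "1 + exp z > 0" by (auto simp: add_pos_pos)
  then show ?thesis
    unfolding sigmoid_def by (simp add: field_simps exp_minus)
qed

lemma sigmoid_lt1: "sigmoid z < 1"
  using sigmoid_pos[of "- z"] one_minus_sigmoid[of z] by linarith

lemma ln_sigmoid: "ln (sigmoid z) = - ln (1 + exp (- z))"
  unfolding sigmoid_def by (simp add: ln_div add_pos_pos)

lemma ln_sigmoid_bound: "\<bar>ln (sigmoid z)\<bar> \<le> ln 2 + \<bar>z\<bar>"
proof -
  have "1 + exp (- z) \<le> 2 * exp \<bar>z\<bar>"
    using exp_le_cancel_iff[of "- z" "\<bar>z\<bar>"] one_le_exp_iff[of "\<bar>z\<bar>"] by linarith
  then have "ln (1 + exp (- z)) \<le> ln (2 * exp \<bar>z\<bar>)"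
    by (simp add: add_pos_pos)
  also have "\<dots> = ln 2 + \<bar>z\<bar>" by (simp add: ln_mult)
  finally have "ln (1 + exp (- z)) \<le> ln 2 + \<bar>z\<bar>" .
  moreover have "0 \<le> ln (1 + exp (- z))" by simp
  ultimately show ?thesis by (simp add: ln_sigmoid)
qed

lemma label_prob_pos: "0 < label_prob \<theta> x b"
  by (simp add: label_prob_def sigmoid_pos sigmoid_lt1)

lemma label_prob_sum: "label_prob \<theta> x True + label_prob \<theta> x False = 1"
  by (simp add: label_prob_def)

lemma label_prob_le1: "label_prob \<theta> x b \<le> 1"
  using sigmoid_pos[of "\<theta> \<bullet> x"] sigmoid_lt1[of "\<theta> \<bullet> x"] by (auto simp: label_prob_def)

lemma ln_label_prob_bound: "\<bar>ln (label_prob \<theta> x b)\<bar> \<le> ln 2 + \<bar>\<theta> \<bullet> x\<bar>"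
  using ln_sigmoid_bound[of "\<theta> \<bullet> x"] ln_sigmoid_bound[of "- (\<theta> \<bullet> x)"]
  by (auto simp: label_prob_def one_minus_sigmoid)

section \<open>KL of Bernoullis\<close>

lemma kl_bern_nonneg:
  assumes "0 < p" "p < 1" "0 < q" "q < 1"
  shows "0 \<le> kl_bern p q"
proof -
  have "ln (q / p) \<le> q / p - 1" using assms by (intro ln_le_minus_one) auto
  then have a: "p * ln (q / p) \<le> q - p" using assms by (simp add: field_simps)
  have "ln ((1 - q) / (1 - p)) \<le> (1 - q) / (1 - p) - 1" using assms by (intro ln_le_minus_one) auto
  then have b: "(1 - p) * ln ((1 - q) / (1 - p)) \<le> p - q" using assms by (simp add: field_simps)
  have "ln (p / q) = - ln (q / p)" using assms by (simp add: ln_div)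
  moreover have "ln ((1 - p) / (1 - q)) = - ln ((1 - q) / (1 - p))" using assms by (simp add: ln_div)
  ultimately show ?thesis using a b unfolding kl_bern_def by simp
qed

lemma sigmoid_deriv: "(sigmoid has_real_derivative sigmoid z * (1 - sigmoid z)) (at z)"
proof -
  have pos: "1 + exp (- z) \<noteq> 0" by (metis add_pos_pos exp_gt_zero less_irrefl zero_less_one)
  have "((\<lambda>z. 1 / (1 + exp (- z))) has_real_derivative exp (- z) / (1 + exp (- z))^2) (at z)"
    using pos by (auto intro!: derivative_eq_intros simp: power2_eq_square field_simps)
  moreover have "exp (- z) / (1 + exp (- z))^2 = sigmoid z * (1 - sigmoid z)"
    using pos unfolding sigmoid_def by (simp add: field_simps power2_eq_square)
  ultimately show ?thesis unfolding sigmoid_def[abs_def] by simp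
qed

lemma sigmoid_lip:
  assumes "a \<le> b"
  shows "sigmoid b - sigmoid a \<le> (b - a) / 4"
proof -
  have "(\<lambda>z. z / 4 - sigmoid z) a \<le> (\<lambda>z. z / 4 - sigmoid z) b"
  proof (rule DERIV_nonneg_imp_nondecreasing[OF assms])
    fix x assume "a \<le> x" "x \<le> b"
    have "(sigmoid x - 1/2)^2 = 1/4 - sigmoid x * (1 - sigmoid x)"
      by (simp add: power2_eq_square algebra_simps)
    then have "sigmoid x * (1 - sigmoid x) \<le> 1 / 4"
      using zero_le_power2[of "sigmoid x - 1/2"] by linarith
    moreover have "((\<lambda>z. z / 4 - sigmoid z) has_real_derivative 1/4 - sigmoid x * (1 - sigmoid x)) (at x)"
      using sigmoid_deriv[of x] by (auto intro!: derivative_eq_intros)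
    ultimately show "\<exists>y. ((\<lambda>z. z / 4 - sigmoid z) has_real_derivative y) (at x) \<and> 0 \<le> y"
      by auto
  qed
  then show ?thesis by simp
qed

lemma sigmoid_mono: "a \<le> b \<Longrightarrow> sigmoid a \<le> sigmoid b"
proof -
  assume "a \<le> b"
  then have "1 + exp (- b) \<le> 1 + exp (- a)" by simp
  moreover have "0 < 1 + exp (- b)" by (simp add: add_pos_pos)
  moreover have "0 < (1 + exp (- a)) * (1 + exp (- b))" by (intro mult_pos_pos add_pos_pos) auto
  ultimately show ?thesis unfolding sigmoid_def by (intro divide_left_mono) auto
qed

lemma kl_sigmoid_bound: "kl_bern (sigmoid a) (sigmoid b) \<le> (a - b)^2 / 8"
proof -
  define p where "p = sigmoid a"
  have p: "0 < p" "p < 1" using sigmoid_pos sigmoid_lt1 p_def by auto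
  define \<phi> where "\<phi> b = p * ln (1 + exp (- b)) + (1 - p) * ln (1 + exp b)" for b
  have klf: "kl_bern p (sigmoid b) = p * ln p + (1 - p) * ln (1 - p) + \<phi> b" for b
  proof -
    have "ln (p / sigmoid b) = ln p + ln (1 + exp (- b))"
      using p sigmoid_pos[of b] by (simp add: ln_div ln_sigmoid)
    moreover have "ln ((1 - p) / (1 - sigmoid b)) = ln (1 - p) + ln (1 + exp b)"
      using p sigmoid_pos[of "-b"] by (simp add: ln_div one_minus_sigmoid ln_sigmoid)
    ultimately show ?thesis unfolding kl_bern_def \<phi>_def by (simp add: algebra_simps)
  qed
  define g where "g b = (b - a)^2 / 8 - \<phi> b" for b
  have dphi: "(\<phi> has_real_derivative sigmoid x - p) (at x)" for x
  proof -
    have d: "(\<phi> has_real_derivative p * (- exp (- x) / (1 + exp (- x))) + (1 - p) * (exp x / (1 + exp x))) (at x)"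
      unfolding \<phi>_def[abs_def]
      apply (rule derivative_eq_intros | simp add: add_pos_pos)+
      apply (simp add: mult.commute)
      done
    have ex: "0 < exp x" "1 + exp x \<noteq> 0" "1 + exp (- x) \<noteq> 0"
      using exp_gt_zero[of x] exp_gt_zero[of "-x"] by linarith+
    have eq: "p * (- exp (- x) / (1 + exp (- x))) + (1 - p) * (exp x / (1 + exp x)) = sigmoid x - p"
    proof -
      have h1: "exp (- x) / (1 + exp (- x)) = 1 / (1 + exp x)"
      proof -
        have e: "exp (- x) = 1 / exp x" by (simp add: exp_minus inverse_eq_divide)
        show ?thesis unfolding e using ex(1) by (simp add: field_simps)
      qed
      have h2: "sigmoid x = exp x / (1 + exp x)"
      proof -
        have e: "exp (- x) = 1 / exp x" by (simp add: exp_minus inverse_eq_divide)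
        show ?thesis unfolding sigmoid_def e using ex(1) by (simp add: field_simps)
      qed
      have "p * (- exp (- x) / (1 + exp (- x))) = - (p * (exp (- x) / (1 + exp (- x))))"
        by (simp only: minus_divide_left[symmetric] mult_minus_right)
      also have "\<dots> = - p / (1 + exp x)" unfolding h1 by simp
      finally have "p * (- exp (- x) / (1 + exp (- x))) = - p / (1 + exp x)" .
      moreover have "- p / (1 + exp x) + (1 - p) * (exp x / (1 + exp x)) = exp x / (1 + exp x) - p"
      proof -
        have "- p / (1 + exp x) + (1 - p) * (exp x / (1 + exp x)) = (- p + (1 - p) * exp x) / (1 + exp x)"
          by (simp add: add_divide_distrib diff_divide_distrib)
        also have "\<dots> = (exp x - p * (1 + exp x)) / (1 + exp x)" by (simp add: algebra_simps)
        also have "\<dots> = exp x / (1 + exp x) - p" using ex by (simp add: diff_divide_distrib)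
        finally show ?thesis .
      qed
      ultimately show ?thesis unfolding h2 by simp
    qed
    show ?thesis using d unfolding eq .
  qed
  have dg: "(g has_real_derivative (x - a) / 4 - (sigmoid x - p)) (at x)" for x
  proof -
    have "((\<lambda>b. (b - a)^2 / 8) has_real_derivative (x - a) / 4) (at x)"
      by (auto intro!: derivative_eq_intros)
    from DERIV_diff[OF this dphi[of x]] show ?thesis unfolding g_def[abs_def] .
  qed
  have "g a \<le> g b"
  proof (cases "a \<le> b")
    case True
    show ?thesis
    proof (rule DERIV_nonneg_imp_nondecreasing[OF True])
      fix x assume "a \<le> x" "x \<le> b"
      then have "sigmoid x - p \<le> (x - a) / 4" using sigmoid_lip[of a x] p_def by simp
      then show "\<exists>y. (g has_real_derivative y) (at x) \<and> 0 \<le> y" using dg[of x] by auto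
    qed
  next
    case False
    then have ba: "b \<le> a" by simp
    show ?thesis
    proof (rule DERIV_nonpos_imp_nonincreasing[OF ba])
      fix x assume "b \<le> x" "x \<le> a"
      then have "p - sigmoid x \<le> (a - x) / 4" using sigmoid_lip[of x a] p_def by simp
      then show "\<exists>y. (g has_real_derivative y) (at x) \<and> y \<le> 0" using dg[of x] by auto
    qed
  qed
  moreover have "kl_bern p (sigmoid a) = 0" unfolding kl_bern_def p_def by simp
  ultimately show ?thesis
    using klf[of a] klf[of b] unfolding g_def p_def by (simp add: power2_commute)
qed

lemma finite_len[simp]: "finite {ys :: bool list. length ys = n}"
  using finite_lists_length_eq[of "UNIV :: bool set" n] by simp

lemma sum_len_Suc:
  "(\<Sum>ys\<in>{ys :: bool list. length ys = Suc n}. f ys)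
    = (\<Sum>ys\<in>{ys. length ys = n}. f (ys @ [True]) + f (ys @ [False]))"
proof -
  have eq: "{ys :: bool list. length ys = Suc n} = (\<lambda>(ys, b). ys @ [b]) ` ({ys. length ys = n} \<times> UNIV)"
  proof safe
    fix ys :: "bool list" assume "length ys = Suc n"
    then show "ys \<in> (\<lambda>(ys, b). ys @ [b]) ` ({ys. length ys = n} \<times> UNIV)"
      by (intro image_eqI[of _ _ "(butlast ys, last ys)"])
         (auto simp: append_butlast_last_id[symmetric] simp del: append_butlast_last_id intro!: append_butlast_last_id[symmetric])
  qed auto
  have inj: "inj_on (\<lambda>(ys, b). ys @ [b]) ({ys :: bool list. length ys = n} \<times> UNIV)"
    by (auto simp: inj_on_def)
  have "(\<Sum>ys\<in>{ys :: bool list. length ys = Suc n}. f ys) = (\<Sum>(ys, b)\<in>{ys. length ys = n} \<times> UNIV. f (ys @ [b]))"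
    unfolding eq by (subst sum.reindex[OF inj]) (simp add: case_prod_unfold)
  also have "\<dots> = (\<Sum>ys\<in>{ys. length ys = n}. \<Sum>b\<in>UNIV. f (ys @ [b]))"
    by (subst sum.cartesian_product[symmetric]) simp
  also have "\<dots> = (\<Sum>ys\<in>{ys. length ys = n}. f (ys @ [True]) + f (ys @ [False]))"
    by (simp add: UNIV_bool add.commute)
  finally show ?thesis .
qed

lemma len0: "{ys :: bool list. length ys = 0} = {[]}" by auto

lemma chain_rule:
  fixes P Q :: "bool list \<Rightarrow> real" and p r :: "bool list \<Rightarrow> bool \<Rightarrow> real"
  assumes P0: "P [] = 1" and Q0: "Q [] = 1"
    and Ps: "\<And>ys b. P (ys @ [b]) = P ys * p ys b"
    and Qs: "\<And>ys b. Q (ys @ [b]) = Q ys * r ys b"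
    and pp: "\<And>ys b. 0 < p ys b" and rp: "\<And>ys b. 0 < r ys b"
    and p1: "\<And>ys. p ys True + p ys False = 1"
    and r1: "\<And>ys. r ys True + r ys False = 1"
  shows "(\<Sum>ys\<in>{ys. length ys = n}. P ys * ln (P ys / Q ys))
       = (\<Sum>t<n. \<Sum>ys\<in>{ys. length ys = t}. P ys * kl_bern (p ys True) (r ys True))"
proof -
  have pos: "0 < P ys \<and> 0 < Q ys" for ys
  proof (induction ys rule: rev_induct)
    case Nil then show ?case using P0 Q0 by simp
  next
    case (snoc b ys) then show ?case using Ps Qs pp rp by simp
  qed
  have psum: "(\<Sum>ys\<in>{ys. length ys = n}. P ys) = 1" for n
  proof (induction n)
    case 0 then show ?case by (simp add: len0 P0)
  next
    case (Suc n)
    have "(\<Sum>ys\<in>{ys. length ys = Suc n}. P ys) = (\<Sum>ys\<in>{ys. length ys = n}. P ys * (p ys True + p ys False))"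
      by (subst sum_len_Suc) (simp add: Ps algebra_simps)
    then show ?case using Suc p1 by simp
  qed
  show ?thesis
  proof (induction n)
    case 0 then show ?case by (simp add: len0 P0 Q0)
  next
    case (Suc n)
    have step: "P (ys @ [True]) * ln (P (ys @ [True]) / Q (ys @ [True])) + P (ys @ [False]) * ln (P (ys @ [False]) / Q (ys @ [False]))
       = P ys * ln (P ys / Q ys) + P ys * kl_bern (p ys True) (r ys True)" for ys
    proof -
      have a: "ln (P ys * p ys b / (Q ys * r ys b)) = ln (P ys / Q ys) + ln (p ys b / r ys b)" for b
        using pos[of ys] pp[of ys b] rp[of ys b]
        by (simp add: ln_div ln_mult)
      have pF: "p ys False = 1 - p ys True" and rF: "r ys False = 1 - r ys True"
        using p1[of ys] r1[of ys] by linarith+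
      have kl: "kl_bern (p ys True) (r ys True) = p ys True * ln (p ys True / r ys True) + p ys False * ln (p ys False / r ys False)"
        unfolding kl_bern_def pF rF by simp
      have "P (ys @ [True]) * ln (P (ys @ [True]) / Q (ys @ [True])) + P (ys @ [False]) * ln (P (ys @ [False]) / Q (ys @ [False]))
        = P ys * p ys True * (ln (P ys / Q ys) + ln (p ys True / r ys True)) + P ys * p ys False * (ln (P ys / Q ys) + ln (p ys False / r ys False))"
        by (simp only: Ps Qs a)
      also have "\<dots> = P ys * (p ys True + p ys False) * ln (P ys / Q ys) + P ys * (p ys True * ln (p ys True / r ys True) + p ys False * ln (p ys False / r ys False))"
        by (simp add: algebra_simps)
      also have "\<dots> = P ys * ln (P ys / Q ys) + P ys * kl_bern (p ys True) (r ys True)"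
        by (simp only: p1 kl)
      finally show ?thesis .
    qed
    have "(\<Sum>ys\<in>{ys. length ys = Suc n}. P ys * ln (P ys / Q ys))
       = (\<Sum>ys\<in>{ys. length ys = n}. P ys * ln (P ys / Q ys) + P ys * kl_bern (p ys True) (r ys True))"
      by (subst sum_len_Suc) (simp add: step)
    also have "\<dots> = (\<Sum>t<Suc n. \<Sum>ys\<in>{ys. length ys = t}. P ys * kl_bern (p ys True) (r ys True))"
      by (simp add: sum.distrib Suc)
    finally show ?case .
  qed
qed

lemma chain_psum:
  fixes P :: "bool list \<Rightarrow> real" and p :: "bool list \<Rightarrow> bool \<Rightarrow> real"
  assumes P0: "P [] = 1" and Ps: "\<And>ys b. P (ys @ [b]) = P ys * p ys b"
    and p1: "\<And>ys. p ys True + p ys False = 1"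
  shows "(\<Sum>ys\<in>{ys. length ys = n}. P ys) = 1"
proof (induction n)
  case 0 then show ?case by (simp add: len0 P0)
next
  case (Suc n)
  have "(\<Sum>ys\<in>{ys. length ys = Suc n}. P ys) = (\<Sum>ys\<in>{ys. length ys = n}. P ys * (p ys True + p ys False))"
    by (subst sum_len_Suc) (simp add: Ps algebra_simps)
  then show ?case using Suc p1 by simp
qed

lemma likelihood_Nil[simp]: "likelihood \<theta> xs [] = 1"
  by (simp add: likelihood_def)

lemma likelihood_snoc: "likelihood \<theta> xs (ys @ [b]) = likelihood \<theta> xs ys * label_prob \<theta> (xs (length ys)) b"
proof -
  have "(\<Prod>s<length (ys @ [b]). label_prob \<theta> (xs s) ((ys @ [b]) ! s))
      = (\<Prod>s<length ys. label_prob \<theta> (xs s) ((ys @ [b]) ! s)) * label_prob \<theta> (xs (length ys)) b"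
    by (simp add: prod.lessThan_Suc)
  also have "(\<Prod>s<length ys. label_prob \<theta> (xs s) ((ys @ [b]) ! s)) = (\<Prod>s<length ys. label_prob \<theta> (xs s) (ys ! s))"
    by (intro prod.cong) (auto simp: nth_append)
  finally show ?thesis unfolding likelihood_def .
qed

lemma likelihood_pos: "0 < likelihood \<theta> xs ys"
  unfolding likelihood_def by (intro prod_pos) (simp add: label_prob_pos)

lemma likelihood_le1: "likelihood \<theta> xs ys \<le> 1"
  unfolding likelihood_def by (intro prod_le_1) (auto simp: label_prob_le1 less_imp_le[OF label_prob_pos])

lemma likelihood_sum: "(\<Sum>ys\<in>{ys. length ys = n}. likelihood \<theta> xs ys) = 1"
  by (rule chain_psum[where p="\<lambda>ys b. label_prob \<theta> (xs (length ys)) b"])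
     (auto simp: likelihood_snoc label_prob_sum)

lemma sigmoid_measurable[measurable]: "sigmoid \<in> borel_measurable borel"
  unfolding sigmoid_def[abs_def] by measurable

lemma sigmoid_measurable_comp[measurable (raw)]:
  "f \<in> borel_measurable M \<Longrightarrow> (\<lambda>x. sigmoid (f x)) \<in> borel_measurable M"
  using measurable_compose[OF _ sigmoid_measurable] by blast

lemma label_prob_measurable: "(\<lambda>\<theta>. label_prob \<theta> x b) \<in> borel_measurable borel"
  unfolding label_prob_def by (cases b) simp_all

lemma likelihood_measurable[measurable]: "(\<lambda>\<theta>. likelihood \<theta> xs ys) \<in> borel_measurable borel"
  unfolding likelihood_def
  by (intro borel_measurable_prod label_prob_measurable)

lemma pos_integral:
  fixes f :: "'a \<Rightarrow> real"
  assumes "prob_space M" "integrable M f" "\<And>x. x \<in> space M \<Longrightarrow> 0 < f x"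
  shows "0 < integral\<^sup>L M f"
proof -
  interpret prob_space M by fact
  have nn: "0 \<le> integral\<^sup>L M f" using assms(3) by (intro Bochner_Integration.integral_nonneg) (auto intro: less_imp_le)
  have "integral\<^sup>L M f \<noteq> 0"
  proof
    assume "integral\<^sup>L M f = 0"
    then have "AE x in M. f x = 0"
      using integral_nonneg_eq_0_iff_AE[OF assms(2)] assms(3) by (auto intro: less_imp_le)
    then have "AE x in M. False"
    proof (rule AE_mp)
      show "AE x in M. f x = 0 \<longrightarrow> False" using assms(3) by (intro AE_I2) (metis less_irrefl)
    qed
    then show False using AE_False by simp
  qed
  then show ?thesis using nn by simp
qed

lemma ln_normal_density:
  assumes "0 < \<sigma>"
  shows "ln (normal_density \<mu> \<sigma> x) = - ln (2 * pi * \<sigma>^2) / 2 - (x - \<mu>)^2 / (2 * \<sigma>^2)"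
proof -
  have p: "0 < 2 * pi * \<sigma>^2" using assms by simp
  have "ln (normal_density \<mu> \<sigma> x) = ln (1 / sqrt (2 * pi * \<sigma>^2)) + ln (exp (- ((x - \<mu>)^2) / (2 * \<sigma>^2)))"
    unfolding normal_density_def using p by (subst ln_mult) auto
  also have "ln (1 / sqrt (2 * pi * \<sigma>^2)) = - ln (2 * pi * \<sigma>^2) / 2"
    using p by (simp add: ln_div ln_sqrt)
  finally show ?thesis by simp
qed

lemma theta_prior_gvec: "theta_prior TYPE('d::finite) = gvec 0 (1 / sqrt (real CARD('d)))"
  unfolding theta_prior_def gvec_def by simp

lemma input_law_gvec: "input_law TYPE('d::finite) = gvec 0 1"
  unfolding input_law_def gvec_def by simp

lemma inner_abs_bound:
  fixes y \<theta> x :: "real^'n"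
  shows "\<bar>y \<bullet> x\<bar> \<le> \<bar>\<theta> \<bullet> x\<bar> + (norm x ^ 2 + (\<Sum>i\<in>UNIV. (y$i - \<theta>$i)^2)) / 2"
proof -
  have n: "norm (y - \<theta>) ^ 2 = (\<Sum>i\<in>UNIV. (y$i - \<theta>$i)^2)"
  proof -
    have "norm (y - \<theta>) ^ 2 = (y - \<theta>) \<bullet> (y - \<theta>)" by (rule power2_norm_eq_inner)
    also have "\<dots> = (\<Sum>i\<in>UNIV. (y$i - \<theta>$i)^2)" by (simp add: inner_vec_def power2_eq_square)
    finally show ?thesis .
  qed
  have "\<bar>y \<bullet> x\<bar> \<le> \<bar>\<theta> \<bullet> x\<bar> + \<bar>(y - \<theta>) \<bullet> x\<bar>"
    by (simp add: inner_diff_left)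
  also have "\<bar>(y - \<theta>) \<bullet> x\<bar> \<le> norm (y - \<theta>) * norm x"
    by (rule Cauchy_Schwarz_ineq2)
  also have "norm (y - \<theta>) * norm x \<le> (norm x ^ 2 + norm (y - \<theta>) ^ 2) / 2"
    using zero_le_power2[of "norm x - norm (y - \<theta>)"] by (simp add: power2_eq_square algebra_simps)
  finally show ?thesis unfolding n by simp
qed

lemma ln_likelihood_bound:
  fixes \<theta>' \<theta> :: "real^'n"
  shows "\<bar>ln (likelihood \<theta>' xs ys)\<bar> \<le> (\<Sum>s<length ys. ln 2 + \<bar>\<theta> \<bullet> xs s\<bar> + norm (xs s) ^ 2 / 2)
      + real (length ys) / 2 * (\<Sum>i\<in>UNIV. (\<theta>'$i - \<theta>$i)^2)"
proof -
  have "ln (likelihood \<theta>' xs ys) = (\<Sum>s<length ys. ln (label_prob \<theta>' (xs s) (ys ! s)))"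
    unfolding likelihood_def by (rule ln_prod) (auto simp: label_prob_pos[THEN less_imp_neq, symmetric])
  then have "\<bar>ln (likelihood \<theta>' xs ys)\<bar> \<le> (\<Sum>s<length ys. \<bar>ln (label_prob \<theta>' (xs s) (ys ! s))\<bar>)"
    by (simp add: sum_abs)
  also have "\<dots> \<le> (\<Sum>s<length ys. ln 2 + \<bar>\<theta> \<bullet> xs s\<bar> + norm (xs s) ^ 2 / 2 + (\<Sum>i\<in>UNIV. (\<theta>'$i - \<theta>$i)^2) / 2)"
  proof (rule sum_mono)
    fix s
    show "\<bar>ln (label_prob \<theta>' (xs s) (ys ! s))\<bar> \<le> ln 2 + \<bar>\<theta> \<bullet> xs s\<bar> + norm (xs s) ^ 2 / 2 + (\<Sum>i\<in>UNIV. (\<theta>'$i - \<theta>$i)^2) / 2"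
      using ln_label_prob_bound[of \<theta>' "xs s" "ys ! s"] inner_abs_bound[of \<theta>' "xs s" \<theta>]
        add_divide_distrib[of "norm (xs s) ^ 2" "\<Sum>i\<in>UNIV. (\<theta>'$i - \<theta>$i)^2" 2] by linarith
  qed
  also have "\<dots> = (\<Sum>s<length ys. ln 2 + \<bar>\<theta> \<bullet> xs s\<bar> + norm (xs s) ^ 2 / 2)
      + real (length ys) / 2 * (\<Sum>i\<in>UNIV. (\<theta>'$i - \<theta>$i)^2)"
    by (simp add: sum.distrib)
  finally show ?thesis .
qed

lemma integrable_ln_likelihood:
  fixes \<theta> :: "real^'n"
  assumes "0 < \<epsilon>"
  shows "integrable (gvec \<theta> \<epsilon>) (\<lambda>\<theta>'. ln (likelihood \<theta>' xs ys))"
  by (rule gvec_integrable_bound[OF assms _ ln_likelihood_bound]) measurable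

lemma card_pos_real: "0 < real CARD('n::finite)"
  by simp

lemma jensen_gauss:
  fixes \<theta> :: "real^'n" and L :: "real^'n \<Rightarrow> real"
  assumes \<epsilon>: "0 < \<epsilon>" and Lm[measurable]: "L \<in> borel_measurable borel"
    and Lpos: "\<And>x. 0 < L x" and L1: "\<And>x. L x \<le> 1"
    and Lint: "integrable (gvec \<theta> \<epsilon>) (\<lambda>x. ln (L x))"
  shows "(\<integral>x. ln (L x) \<partial>gvec \<theta> \<epsilon>)
      - (\<Sum>i\<in>UNIV. real CARD('n) * ((\<theta>$i)^2 + \<epsilon>^2) / 2 - 1/2 - ln (real CARD('n) * \<epsilon>^2) / 2)
      \<le> ln (\<integral>x. L x \<partial>gvec 0 (1 / sqrt (real CARD('n))))"
proof -
  define d where "d = real CARD('n)"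
  define s where "s = 1 / sqrt d"
  have d: "0 < d" unfolding d_def by simp
  have s: "0 < s" unfolding s_def using d by simp
  have s2: "s^2 = 1 / d" unfolding s_def using d by (simp add: power_divide)
  define g where "g x = (\<Prod>i\<in>UNIV. normal_density 0 s (x$i))" for x :: "real^'n"
  define h where "h x = (\<Prod>i\<in>UNIV. normal_density (\<theta>$i) \<epsilon> (x$i))" for x :: "real^'n"
  have gpos: "0 < g x" for x unfolding g_def using s by (intro prod_pos) (simp add: normal_density_pos)
  have hpos: "0 < h x" for x unfolding h_def using \<epsilon> by (intro prod_pos) (simp add: normal_density_pos)
  have gm[measurable]: "g \<in> borel_measurable borel" unfolding g_def[abs_def] by measurable
  have hm[measurable]: "h \<in> borel_measurable borel" unfolding h_def[abs_def] by measurable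
  have \<pi>: "gvec 0 s = density lborel (\<lambda>x. ennreal (g x))"
    unfolding gvec_def g_def by simp
  have q: "gvec \<theta> \<epsilon> = density lborel (\<lambda>x. ennreal (h x))"
    unfolding gvec_def h_def by simp
  define M where "M = (\<integral>x. L x \<partial>gvec 0 s)"
  define F where "F x = L x * g x / h x" for x
  have Fm[measurable]: "F \<in> borel_measurable borel" unfolding F_def[abs_def] by measurable
  have Fpos: "0 < F x" for x unfolding F_def using Lpos gpos hpos by simp
  have intLpi: "integrable (gvec 0 s) L"
  proof (rule gvec_integrable_bound[OF s Lm, of 1 0])
    fix x show "\<bar>L x\<bar> \<le> 1 + 0 * (\<Sum>i\<in>UNIV. (x $ i - (0::real^'n) $ i)\<^sup>2)"
      using Lpos[of x] L1[of x] by simp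
  qed
  have intgL: "integrable lborel (\<lambda>x. g x * L x)"
    using intLpi unfolding \<pi> by (subst (asm) integrable_density) (auto intro: less_imp_le[OF gpos])
  have M_eq: "M = (\<integral>x. g x * L x \<partial>lborel)"
    unfolding M_def \<pi> by (subst integral_density) (auto intro: less_imp_le[OF gpos])
  have hF: "h x * F x = g x * L x" for x unfolding F_def using hpos[of x] by simp
  have intF: "integrable (gvec \<theta> \<epsilon>) F"
    unfolding q by (subst integrable_density) (auto intro: less_imp_le[OF hpos] simp: hF intgL)
  have intF_eq: "(\<integral>x. F x \<partial>gvec \<theta> \<epsilon>) = M"
    unfolding q M_eq by (subst integral_density) (auto intro: less_imp_le[OF hpos] simp: hF)
  have Mpos: "0 < M"
    unfolding M_def by (rule pos_integral[OF prob_space_gvec[OF s] intLpi Lpos])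
  define A where "A i = - ln (2 * pi * s^2) / 2 + ln (2 * pi * \<epsilon>^2) / 2 - (\<theta>$i)^2 / (2 * s^2)" for i
  define B where "B i = - \<theta>$i / s^2" for i
  define Cc where "Cc = 1 / (2 * \<epsilon>^2) - 1 / (2 * s^2)"
  define \<Phi> where "\<Phi> x = (\<Sum>i\<in>UNIV. A i + B i * (x$i - \<theta>$i) + Cc * (x$i - \<theta>$i)^2)" for x :: "real^'n"
  have lnF: "ln (F x) = ln (L x) + \<Phi> x" for x
  proof -
    have "ln (F x) = ln (L x) + (ln (g x) - ln (h x))"
      unfolding F_def using Lpos[of x] gpos[of x] hpos[of x] by (simp add: ln_div ln_mult)
    also have "ln (g x) = (\<Sum>i\<in>UNIV. ln (normal_density 0 s (x$i)))"
      unfolding g_def by (rule ln_prod) (use s in \<open>auto simp: normal_density_pos[THEN less_imp_neq, symmetric]\<close>)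
    also have "ln (h x) = (\<Sum>i\<in>UNIV. ln (normal_density (\<theta>$i) \<epsilon> (x$i)))"
      unfolding h_def by (rule ln_prod) (use \<epsilon> in \<open>auto simp: normal_density_pos[THEN less_imp_neq, symmetric]\<close>)
    also have "(\<Sum>i\<in>UNIV. ln (normal_density 0 s (x$i))) - (\<Sum>i\<in>UNIV. ln (normal_density (\<theta>$i) \<epsilon> (x$i))) = \<Phi> x"
      unfolding \<Phi>_def sum_subtractf[symmetric]
    proof (intro sum.cong refl)
      fix i
      show "ln (normal_density 0 s (x$i)) - ln (normal_density (\<theta>$i) \<epsilon> (x$i))
          = A i + B i * (x$i - \<theta>$i) + Cc * (x$i - \<theta>$i)^2"
        unfolding ln_normal_density[OF s] ln_normal_density[OF \<epsilon>] A_def B_def Cc_def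
        using s \<epsilon> by (simp add: field_simps power2_eq_square)
    qed
    finally show ?thesis by simp
  qed
  have intPhi_i: "integrable (gvec \<theta> \<epsilon>) (\<lambda>x. A i + B i * (x$i - \<theta>$i) + Cc * (x$i - \<theta>$i)^2)" for i
    using gvec_const[OF \<epsilon>] gvec_c1[OF \<epsilon>] gvec_c2[OF \<epsilon>]
    by (intro Bochner_Integration.integrable_add integrable_mult_right) auto
  have intPhi: "integrable (gvec \<theta> \<epsilon>) \<Phi>"
    unfolding \<Phi>_def[abs_def] using intPhi_i by (intro Bochner_Integration.integrable_sum) auto
  have Phi_i: "(\<integral>x. A i + B i * (x$i - \<theta>$i) + Cc * (x$i - \<theta>$i)^2 \<partial>gvec \<theta> \<epsilon>) = A i + Cc * \<epsilon>^2" for i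
  proof -
    have i1: "integrable (gvec \<theta> \<epsilon>) (\<lambda>x. A i)" by (rule gvec_const(1)[OF \<epsilon>])
    have i2: "integrable (gvec \<theta> \<epsilon>) (\<lambda>x. B i * (x$i - \<theta>$i))"
      by (rule integrable_mult_right) (rule gvec_c1(1)[OF \<epsilon>])
    have i3: "integrable (gvec \<theta> \<epsilon>) (\<lambda>x. Cc * (x$i - \<theta>$i)^2)"
      by (rule integrable_mult_right) (rule gvec_c2(1)[OF \<epsilon>])
    have "(\<integral>x. A i + B i * (x$i - \<theta>$i) + Cc * (x$i - \<theta>$i)^2 \<partial>gvec \<theta> \<epsilon>)
        = (\<integral>x. A i + B i * (x$i - \<theta>$i) \<partial>gvec \<theta> \<epsilon>) + (\<integral>x. Cc * (x$i - \<theta>$i)^2 \<partial>gvec \<theta> \<epsilon>)"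
      by (rule Bochner_Integration.integral_add[OF Bochner_Integration.integrable_add[OF i1 i2] i3])
    also have "(\<integral>x. A i + B i * (x$i - \<theta>$i) \<partial>gvec \<theta> \<epsilon>) = (\<integral>x. A i \<partial>gvec \<theta> \<epsilon>) + (\<integral>x. B i * (x$i - \<theta>$i) \<partial>gvec \<theta> \<epsilon>)"
      by (rule Bochner_Integration.integral_add[OF i1 i2])
    also have "(\<integral>x. A i \<partial>gvec \<theta> \<epsilon>) = A i" by (rule gvec_const(2)[OF \<epsilon>])
    also have "(\<integral>x. B i * (x$i - \<theta>$i) \<partial>gvec \<theta> \<epsilon>) = 0"
      using gvec_c1(2)[OF \<epsilon>, of \<theta> i] by simp
    also have "(\<integral>x. Cc * (x$i - \<theta>$i)^2 \<partial>gvec \<theta> \<epsilon>) = Cc * \<epsilon>^2"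
      using gvec_c2(2)[OF \<epsilon>, of \<theta> i] by simp
    finally show ?thesis by simp
  qed
  have Phi_val: "(\<integral>x. \<Phi> x \<partial>gvec \<theta> \<epsilon>) = (\<Sum>i\<in>UNIV. A i + Cc * \<epsilon>^2)"
    unfolding \<Phi>_def[abs_def] using intPhi_i by (simp add: integral_sum Phi_i)
  have Phi_val2: "A i + Cc * \<epsilon>^2 = - (d * ((\<theta>$i)^2 + \<epsilon>^2) / 2 - 1/2 - ln (d * \<epsilon>^2) / 2)" for i
  proof -
    have "ln (2 * pi * \<epsilon>^2) - ln (2 * pi * s^2) = ln (d * \<epsilon>^2)"
      using d \<epsilon> s2 by (simp add: ln_mult ln_div)
    then show ?thesis unfolding A_def Cc_def s2 using d \<epsilon> by (simp add: field_simps)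
  qed
  have intlnF: "integrable (gvec \<theta> \<epsilon>) (\<lambda>x. ln (F x))"
    unfolding lnF using Lint intPhi by (rule Bochner_Integration.integrable_add)
  have ptw: "ln (F x) \<le> ln M + (1 / M) * F x - 1" for x
  proof -
    have "ln (F x / M) \<le> F x / M - 1" using Fpos[of x] Mpos by (intro ln_le_minus_one) auto
    then show ?thesis using Fpos[of x] Mpos by (simp add: ln_div)
  qed
  have iC: "integrable (gvec \<theta> \<epsilon>) (\<lambda>x. c)" for c :: real by (rule gvec_const(1)[OF \<epsilon>])
  have iMF: "integrable (gvec \<theta> \<epsilon>) (\<lambda>x. (1 / M) * F x)" by (rule integrable_mult_right[OF intF])
  have iR: "integrable (gvec \<theta> \<epsilon>) (\<lambda>x. ln M + (1 / M) * F x - 1)"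
    by (rule Bochner_Integration.integrable_diff[OF Bochner_Integration.integrable_add[OF iC iMF] iC])
  have "(\<integral>x. ln (F x) \<partial>gvec \<theta> \<epsilon>) \<le> (\<integral>x. ln M + (1 / M) * F x - 1 \<partial>gvec \<theta> \<epsilon>)"
    by (rule integral_mono[OF intlnF iR ptw])
  also have "\<dots> = (\<integral>x. ln M + (1 / M) * F x \<partial>gvec \<theta> \<epsilon>) - (\<integral>x. 1 \<partial>gvec \<theta> \<epsilon>)"
    by (rule Bochner_Integration.integral_diff[OF Bochner_Integration.integrable_add[OF iC iMF] iC])
  also have "(\<integral>x. ln M + (1 / M) * F x \<partial>gvec \<theta> \<epsilon>) = (\<integral>x. ln M \<partial>gvec \<theta> \<epsilon>) + (\<integral>x. (1 / M) * F x \<partial>gvec \<theta> \<epsilon>)"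
    by (rule Bochner_Integration.integral_add[OF iC iMF])
  also have "(\<integral>x. (1 / M) * F x \<partial>gvec \<theta> \<epsilon>) = 1"
    using Mpos by (simp add: intF_eq)
  also have "(\<integral>x. ln M \<partial>gvec \<theta> \<epsilon>) = ln M" by (rule gvec_const(2)[OF \<epsilon>])
  also have "(\<integral>x. 1 \<partial>gvec \<theta> \<epsilon>) = (1::real)" by (rule gvec_const(2)[OF \<epsilon>])
  finally have J: "(\<integral>x. ln (F x) \<partial>gvec \<theta> \<epsilon>) \<le> ln M" by simp
  have "(\<integral>x. ln (F x) \<partial>gvec \<theta> \<epsilon>) = (\<integral>x. ln (L x) \<partial>gvec \<theta> \<epsilon>) + (\<integral>x. \<Phi> x \<partial>gvec \<theta> \<epsilon>)"
    unfolding lnF using Lint intPhi by simp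
  moreover have "(\<integral>x. \<Phi> x \<partial>gvec \<theta> \<epsilon>) = - (\<Sum>i\<in>UNIV. d * ((\<theta>$i)^2 + \<epsilon>^2) / 2 - 1/2 - ln (d * \<epsilon>^2) / 2)"
    unfolding Phi_val Phi_val2 by (rule sum_negf)
  ultimately show ?thesis using J unfolding M_def s_def d_def by linarith
qed

definition Cth :: "real^'d::finite \<Rightarrow> real \<Rightarrow> real" where
  "Cth \<theta> \<epsilon> = (\<Sum>i\<in>UNIV. real CARD('d) * ((\<theta>$i)^2 + \<epsilon>^2) / 2 - 1/2 - ln (real CARD('d) * \<epsilon>^2) / 2)"

definition Mev :: "'d itself \<Rightarrow> (nat \<Rightarrow> real^'d::finite) \<Rightarrow> bool list \<Rightarrow> real" where
  "Mev D xs ys = (\<integral>\<theta>'. likelihood \<theta>' xs ys \<partial>theta_prior D)"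

lemma likelihood_ne0[simp]: "likelihood \<theta> xs ys \<noteq> 0"
  using likelihood_pos[of \<theta> xs ys] by simp

lemma integrable_likelihood_gvec:
  fixes m :: "real^'d::finite"
  assumes "0 < \<sigma>"
  shows "integrable (gvec m \<sigma>) (\<lambda>\<theta>'. likelihood \<theta>' xs ys * c)"
proof (rule gvec_integrable_bound[OF assms, of _ "\<bar>c\<bar>" 0])
  show "(\<lambda>\<theta>'. likelihood \<theta>' xs ys * c) \<in> borel_measurable borel" by measurable
  fix x :: "real^'d"
  have "\<bar>likelihood x xs ys\<bar> \<le> 1" using likelihood_pos[of x xs ys] likelihood_le1[of x xs ys] by simp
  then have "\<bar>likelihood x xs ys * c\<bar> \<le> \<bar>c\<bar>" by (simp add: abs_mult mult_left_le_one_le)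
  then show "\<bar>likelihood x xs ys * c\<bar> \<le> \<bar>c\<bar> + 0 * (\<Sum>i\<in>UNIV. (x $ i - m $ i)\<^sup>2)" by simp
qed

lemma ln_Mev_bound:
  fixes \<theta> :: "real^'d::finite"
  assumes \<epsilon>: "0 < \<epsilon>"
  shows "(\<integral>\<theta>'. ln (likelihood \<theta>' xs ys) \<partial>gvec \<theta> \<epsilon>) - Cth \<theta> \<epsilon> \<le> ln (Mev TYPE('d) xs ys)"
  using jensen_gauss[OF \<epsilon> likelihood_measurable likelihood_pos likelihood_le1 integrable_ln_likelihood[OF \<epsilon>], of \<theta> xs ys]
  unfolding Cth_def Mev_def theta_prior_gvec .

lemma kl_chain_fixed:
  fixes \<theta> \<theta>' :: "real^'d::finite"
  shows "(\<Sum>ys\<in>{ys. length ys = n}. likelihood \<theta> xs ys * (ln (likelihood \<theta> xs ys) - ln (likelihood \<theta>' xs ys)))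
     = (\<Sum>t<n. kl_bern (sigmoid (\<theta> \<bullet> xs t)) (sigmoid (\<theta>' \<bullet> xs t)))"
proof -
  have "(\<Sum>ys\<in>{ys. length ys = n}. likelihood \<theta> xs ys * (ln (likelihood \<theta> xs ys) - ln (likelihood \<theta>' xs ys)))
      = (\<Sum>ys\<in>{ys. length ys = n}. likelihood \<theta> xs ys * ln (likelihood \<theta> xs ys / likelihood \<theta>' xs ys))"
    by (simp add: ln_div)
  also have "\<dots> = (\<Sum>t<n. \<Sum>ys\<in>{ys. length ys = t}. likelihood \<theta> xs ys *
        kl_bern (label_prob \<theta> (xs (length ys)) True) (label_prob \<theta>' (xs (length ys)) True))"
    by (rule chain_rule) (auto simp: likelihood_snoc label_prob_pos label_prob_sum)
  also have "\<dots> = (\<Sum>t<n. \<Sum>ys\<in>{ys. length ys = t}. likelihood \<theta> xs ys *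
        kl_bern (sigmoid (\<theta> \<bullet> xs t)) (sigmoid (\<theta>' \<bullet> xs t)))"
    by (intro sum.cong refl) (auto simp: label_prob_def)
  also have "\<dots> = (\<Sum>t<n. kl_bern (sigmoid (\<theta> \<bullet> xs t)) (sigmoid (\<theta>' \<bullet> xs t)))"
    by (simp add: sum_distrib_right[symmetric] likelihood_sum)
  finally show ?thesis .
qed

lemma inner_diff_sq:
  fixes \<theta> \<theta>' x :: "real^'d::finite"
  shows "(\<theta> \<bullet> x - \<theta>' \<bullet> x)^2 = (\<Sum>i\<in>UNIV. x$i * (\<theta>'$i - \<theta>$i))^2"
proof -
  have "\<theta> \<bullet> x - \<theta>' \<bullet> x = - (\<Sum>i\<in>UNIV. x$i * (\<theta>'$i - \<theta>$i))"
    by (simp add: inner_vec_def sum_subtractf[symmetric] sum_negf[symmetric] algebra_simps)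
  then show ?thesis by simp
qed

lemma per_theta_bound:
  fixes \<theta> :: "real^'d::finite"
  assumes \<epsilon>: "0 < \<epsilon>"
  shows "(\<Sum>ys\<in>{ys. length ys = n}. likelihood \<theta> xs ys * ln (likelihood \<theta> xs ys / Mev TYPE('d) xs ys))
     \<le> \<epsilon>^2 / 8 * (\<Sum>t<n. \<Sum>i\<in>UNIV. (xs t $ i)^2) + Cth \<theta> \<epsilon>"
proof -
  let ?q = "gvec \<theta> \<epsilon>"
  let ?L = "\<lambda>\<theta>' ys. likelihood \<theta>' xs ys"
  let ?I = "\<lambda>ys. (\<integral>\<theta>'. ln (?L \<theta>' ys) \<partial>?q)"
  have Mpos: "0 < Mev TYPE('d) xs ys" for ys
    unfolding Mev_def theta_prior_gvec
    by (rule pos_integral[OF prob_space_gvec])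
       (use integrable_likelihood_gvec[of _ _ xs ys 1] in \<open>auto simp: likelihood_pos\<close>)
  have step1: "(\<Sum>ys\<in>{ys. length ys = n}. ?L \<theta> ys * ln (?L \<theta> ys / Mev TYPE('d) xs ys))
      \<le> (\<Sum>ys\<in>{ys. length ys = n}. ?L \<theta> ys * (ln (?L \<theta> ys) - ?I ys + Cth \<theta> \<epsilon>))"
  proof (rule sum_mono)
    fix ys
    have "ln (?L \<theta> ys / Mev TYPE('d) xs ys) = ln (?L \<theta> ys) - ln (Mev TYPE('d) xs ys)"
      using Mpos[of ys] by (simp add: ln_div)
    also have "\<dots> \<le> ln (?L \<theta> ys) - ?I ys + Cth \<theta> \<epsilon>"
      using ln_Mev_bound[OF \<epsilon>, of \<theta> xs ys] by simp
    finally show "?L \<theta> ys * ln (?L \<theta> ys / Mev TYPE('d) xs ys) \<le> ?L \<theta> ys * (ln (?L \<theta> ys) - ?I ys + Cth \<theta> \<epsilon>)"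
      using likelihood_pos[of \<theta> xs ys] by (intro mult_left_mono) auto
  qed
  have step2: "(\<Sum>ys\<in>{ys. length ys = n}. ?L \<theta> ys * (ln (?L \<theta> ys) - ?I ys + Cth \<theta> \<epsilon>))
      = (\<Sum>ys\<in>{ys. length ys = n}. ?L \<theta> ys * (ln (?L \<theta> ys) - ?I ys)) + Cth \<theta> \<epsilon>"
    using likelihood_sum[of \<theta> xs n]
    by (simp add: distrib_left sum.distrib sum_distrib_right[symmetric])
  have intl: "integrable ?q (\<lambda>\<theta>'. ln (?L \<theta>' ys))" for ys
    by (rule integrable_ln_likelihood[OF \<epsilon>])
  have intS: "integrable ?q (\<lambda>\<theta>'. \<Sum>ys\<in>{ys. length ys = n}. ?L \<theta> ys * ln (?L \<theta> ys) - ?L \<theta> ys * ln (?L \<theta>' ys))"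
    using gvec_const(1)[OF \<epsilon>] intl
    by (intro Bochner_Integration.integrable_sum Bochner_Integration.integrable_diff integrable_mult_right) auto
  have step3: "(\<Sum>ys\<in>{ys. length ys = n}. ?L \<theta> ys * (ln (?L \<theta> ys) - ?I ys))
      = (\<integral>\<theta>'. (\<Sum>ys\<in>{ys. length ys = n}. ?L \<theta> ys * ln (?L \<theta> ys) - ?L \<theta> ys * ln (?L \<theta>' ys)) \<partial>?q)"
  proof -
    have "(\<integral>\<theta>'. (\<Sum>ys\<in>{ys. length ys = n}. ?L \<theta> ys * ln (?L \<theta> ys) - ?L \<theta> ys * ln (?L \<theta>' ys)) \<partial>?q)
       = (\<Sum>ys\<in>{ys. length ys = n}. (\<integral>\<theta>'. ?L \<theta> ys * ln (?L \<theta> ys) - ?L \<theta> ys * ln (?L \<theta>' ys) \<partial>?q))"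
      using gvec_const(1)[OF \<epsilon>] intl
      by (intro Bochner_Integration.integral_sum Bochner_Integration.integrable_diff integrable_mult_right) auto
    also have "\<dots> = (\<Sum>ys\<in>{ys. length ys = n}. ?L \<theta> ys * (ln (?L \<theta> ys) - ?I ys))"
    proof (intro sum.cong refl)
      fix ys
      have "(\<integral>\<theta>'. ?L \<theta> ys * ln (?L \<theta> ys) - ?L \<theta> ys * ln (?L \<theta>' ys) \<partial>?q)
          = (\<integral>\<theta>'. ?L \<theta> ys * ln (?L \<theta> ys) \<partial>?q) - (\<integral>\<theta>'. ?L \<theta> ys * ln (?L \<theta>' ys) \<partial>?q)"
        by (rule Bochner_Integration.integral_diff[OF gvec_const(1)[OF \<epsilon>] integrable_mult_right[OF intl]])
      also have "\<dots> = ?L \<theta> ys * ln (?L \<theta> ys) - ?L \<theta> ys * ?I ys"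
        using gvec_const(2)[OF \<epsilon>] by simp
      finally show "(\<integral>\<theta>'. ?L \<theta> ys * ln (?L \<theta> ys) - ?L \<theta> ys * ln (?L \<theta>' ys) \<partial>?q) = ?L \<theta> ys * (ln (?L \<theta> ys) - ?I ys)"
        by (simp add: algebra_simps)
    qed
    finally show ?thesis by simp
  qed
  have intB: "integrable ?q (\<lambda>\<theta>'. \<Sum>t<n. (\<Sum>i\<in>UNIV. xs t $ i * (\<theta>'$i - \<theta>$i))^2 / 8)"
    using gvec_quad(1)[OF \<epsilon>]
    by (intro Bochner_Integration.integrable_sum integrable_divide_zero) auto
  have step4: "(\<integral>\<theta>'. (\<Sum>ys\<in>{ys. length ys = n}. ?L \<theta> ys * ln (?L \<theta> ys) - ?L \<theta> ys * ln (?L \<theta>' ys)) \<partial>?q)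
      \<le> (\<integral>\<theta>'. (\<Sum>t<n. (\<Sum>i\<in>UNIV. xs t $ i * (\<theta>'$i - \<theta>$i))^2 / 8) \<partial>?q)"
  proof (rule integral_mono[OF intS intB])
    fix \<theta>' :: "real^'d"
    have "(\<Sum>ys\<in>{ys. length ys = n}. ?L \<theta> ys * ln (?L \<theta> ys) - ?L \<theta> ys * ln (?L \<theta>' ys))
        = (\<Sum>t<n. kl_bern (sigmoid (\<theta> \<bullet> xs t)) (sigmoid (\<theta>' \<bullet> xs t)))"
      by (simp only: right_diff_distrib[symmetric]) (rule kl_chain_fixed)
    also have "\<dots> \<le> (\<Sum>t<n. (\<theta> \<bullet> xs t - \<theta>' \<bullet> xs t)^2 / 8)"
      by (intro sum_mono kl_sigmoid_bound)
    also have "\<dots> = (\<Sum>t<n. (\<Sum>i\<in>UNIV. xs t $ i * (\<theta>'$i - \<theta>$i))^2 / 8)"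
      by (simp add: inner_diff_sq)
    finally show "(\<Sum>ys\<in>{ys. length ys = n}. ?L \<theta> ys * ln (?L \<theta> ys) - ?L \<theta> ys * ln (?L \<theta>' ys))
        \<le> (\<Sum>t<n. (\<Sum>i\<in>UNIV. xs t $ i * (\<theta>'$i - \<theta>$i))^2 / 8)" .
  qed
  have step5: "(\<integral>\<theta>'. (\<Sum>t<n. (\<Sum>i\<in>UNIV. xs t $ i * (\<theta>'$i - \<theta>$i))^2 / 8) \<partial>?q)
      = \<epsilon>^2 / 8 * (\<Sum>t<n. \<Sum>i\<in>UNIV. (xs t $ i)^2)"
  proof -
    have "(\<integral>\<theta>'. (\<Sum>t<n. (\<Sum>i\<in>UNIV. xs t $ i * (\<theta>'$i - \<theta>$i))^2 / 8) \<partial>?q)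
        = (\<Sum>t<n. (\<integral>\<theta>'. (\<Sum>i\<in>UNIV. xs t $ i * (\<theta>'$i - \<theta>$i))^2 / 8 \<partial>?q))"
      by (rule Bochner_Integration.integral_sum) (intro integrable_divide_zero gvec_quad(1)[OF \<epsilon>])
    also have "\<dots> = (\<Sum>t<n. \<epsilon>^2 * (\<Sum>i\<in>UNIV. (xs t $ i)^2) / 8)"
    proof (intro sum.cong refl)
      fix t
      show "(\<integral>\<theta>'. (\<Sum>i\<in>UNIV. xs t $ i * (\<theta>'$i - \<theta>$i))^2 / 8 \<partial>?q) = \<epsilon>^2 * (\<Sum>i\<in>UNIV. (xs t $ i)^2) / 8"
        using gvec_quad(2)[OF \<epsilon>, of \<theta> "\<lambda>i. xs t $ i"] by simp
    qed
    finally show ?thesis by (simp add: sum_distrib_left sum_divide_distrib)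
  qed
  show ?thesis using step1 step2 step3 step4 step5 by linarith
qed

lemma integrable_gvec_bounded:
  fixes m :: "real^'d::finite" and f :: "real^'d \<Rightarrow> real"
  assumes "0 < \<sigma>" "f \<in> borel_measurable borel" "\<And>x. \<bar>f x\<bar> \<le> c"
  shows "integrable (gvec m \<sigma>) f"
  by (rule gvec_integrable_bound[OF assms(1,2), of c 0]) (simp add: assms(3))

lemma s_pos: "0 < 1 / sqrt (real CARD('d::finite))"
  by simp

lemma bayes_chain:
  fixes \<theta> :: "real^'d::finite"
  shows "(\<Sum>ys\<in>{ys. length ys = n}. likelihood \<theta> xs ys * ln (likelihood \<theta> xs ys / Mev TYPE('d) xs ys))
    = (\<Sum>t<n. \<Sum>ys\<in>{ys. length ys = t}. likelihood \<theta> xs ys *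
         kl_bern (sigmoid (\<theta> \<bullet> xs t)) (predictive TYPE('d) xs ys))"
proof -
  let ?\<pi> = "gvec (0::real^'d) (1 / sqrt (real CARD('d)))"
  have s: "0 < 1 / sqrt (real CARD('d))" by simp
  have prob: "prob_space ?\<pi>" by (rule prob_space_gvec[OF s])
  have Mev_eq: "Mev TYPE('d) xs ys = (\<integral>\<theta>'. likelihood \<theta>' xs ys \<partial>?\<pi>)" for ys
    unfolding Mev_def theta_prior_gvec ..
  have pred_eq: "predictive TYPE('d) xs ys = (\<integral>\<theta>'. likelihood \<theta>' xs ys * sigmoid (\<theta>' \<bullet> xs (length ys)) \<partial>?\<pi>) / Mev TYPE('d) xs ys" for ys
    unfolding predictive_def Mev_eq theta_prior_gvec ..
  have iL: "integrable ?\<pi> (\<lambda>\<theta>'. likelihood \<theta>' xs ys)" for ys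
    using integrable_likelihood_gvec[OF s, of 0 xs ys 1] by simp
  have iLs: "integrable ?\<pi> (\<lambda>\<theta>'. likelihood \<theta>' xs ys * sigmoid (\<theta>' \<bullet> xs (length ys)))" for ys
  proof (rule integrable_gvec_bounded[OF s _, of _ 1])
    show "(\<lambda>\<theta>'. likelihood \<theta>' xs ys * sigmoid (\<theta>' \<bullet> xs (length ys))) \<in> borel_measurable borel" by measurable
    fix x :: "real^'d"
    show "\<bar>likelihood x xs ys * sigmoid (x \<bullet> xs (length ys))\<bar> \<le> 1"
      using likelihood_pos[of x xs ys] likelihood_le1[of x xs ys] sigmoid_pos[of "x \<bullet> xs (length ys)"]
        sigmoid_lt1[of "x \<bullet> xs (length ys)"]
      by (simp add: abs_mult mult_le_one)
  qed
  have iLs': "integrable ?\<pi> (\<lambda>\<theta>'. likelihood \<theta>' xs ys * (1 - sigmoid (\<theta>' \<bullet> xs (length ys))))" for ys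
    using Bochner_Integration.integrable_diff[OF iL iLs, of ys] by (simp add: right_diff_distrib)
  have Mpos: "0 < Mev TYPE('d) xs ys" for ys
    unfolding Mev_eq by (rule pos_integral[OF prob iL]) (simp add: likelihood_pos)
  have Ipos: "0 < (\<integral>\<theta>'. likelihood \<theta>' xs ys * sigmoid (\<theta>' \<bullet> xs (length ys)) \<partial>?\<pi>)" for ys
    by (rule pos_integral[OF prob iLs]) (simp add: likelihood_pos sigmoid_pos)
  have Ipos': "0 < (\<integral>\<theta>'. likelihood \<theta>' xs ys * (1 - sigmoid (\<theta>' \<bullet> xs (length ys))) \<partial>?\<pi>)" for ys
    by (rule pos_integral[OF prob iLs']) (simp add: likelihood_pos sigmoid_lt1)
  have Idiff: "(\<integral>\<theta>'. likelihood \<theta>' xs ys * (1 - sigmoid (\<theta>' \<bullet> xs (length ys))) \<partial>?\<pi>)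
      = Mev TYPE('d) xs ys - (\<integral>\<theta>'. likelihood \<theta>' xs ys * sigmoid (\<theta>' \<bullet> xs (length ys)) \<partial>?\<pi>)" for ys
    unfolding Mev_eq using Bochner_Integration.integral_diff[OF iL iLs, of ys] by (simp add: right_diff_distrib)
  define r where "r ys b = (if b then predictive TYPE('d) xs ys else 1 - predictive TYPE('d) xs ys)" for ys b
  have rpos: "0 < r ys b" for ys b
  proof -
    have "0 < predictive TYPE('d) xs ys" unfolding pred_eq using Ipos Mpos by simp
    moreover have "predictive TYPE('d) xs ys < 1"
    proof -
      have "(\<integral>\<theta>'. likelihood \<theta>' xs ys * sigmoid (\<theta>' \<bullet> xs (length ys)) \<partial>?\<pi>) < Mev TYPE('d) xs ys"
        using Ipos'[of ys] Idiff[of ys] by linarith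
      then show ?thesis unfolding pred_eq using Mpos[of ys] by (simp add: divide_less_eq)
    qed
    ultimately show ?thesis unfolding r_def by auto
  qed
  have Ms: "Mev TYPE('d) xs (ys @ [b]) = Mev TYPE('d) xs ys * r ys b" for ys b
  proof (cases b)
    case True
    have "Mev TYPE('d) xs (ys @ [b]) = (\<integral>\<theta>'. likelihood \<theta>' xs ys * sigmoid (\<theta>' \<bullet> xs (length ys)) \<partial>?\<pi>)"
      unfolding Mev_eq using True by (simp add: likelihood_snoc label_prob_def)
    also have "\<dots> = Mev TYPE('d) xs ys * predictive TYPE('d) xs ys"
      unfolding pred_eq using Mpos[of ys] by simp
    finally show ?thesis unfolding r_def using True by simp
  next
    case False
    have "Mev TYPE('d) xs (ys @ [b]) = (\<integral>\<theta>'. likelihood \<theta>' xs ys * (1 - sigmoid (\<theta>' \<bullet> xs (length ys))) \<partial>?\<pi>)"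
      unfolding Mev_eq using False by (simp add: likelihood_snoc label_prob_def)
    also have "\<dots> = Mev TYPE('d) xs ys * (1 - predictive TYPE('d) xs ys)"
      unfolding Idiff pred_eq using Mpos[of ys] by (simp add: right_diff_distrib)
    finally show ?thesis unfolding r_def using False by simp
  qed
  have r1: "r ys True + r ys False = 1" for ys by (simp add: r_def)
  have M0: "Mev TYPE('d) xs [] = 1"
    unfolding Mev_eq using prob_space.prob_space[OF prob] by simp
  have "(\<Sum>ys\<in>{ys. length ys = n}. likelihood \<theta> xs ys * ln (likelihood \<theta> xs ys / Mev TYPE('d) xs ys))
    = (\<Sum>t<n. \<Sum>ys\<in>{ys. length ys = t}. likelihood \<theta> xs ys *
         kl_bern (label_prob \<theta> (xs (length ys)) True) (r ys True))"
    by (rule chain_rule[where p="\<lambda>ys b. label_prob \<theta> (xs (length ys)) b"])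
       (auto simp: M0 Ms likelihood_snoc label_prob_pos label_prob_sum rpos r1)
  also have "\<dots> = (\<Sum>t<n. \<Sum>ys\<in>{ys. length ys = t}. likelihood \<theta> xs ys *
         kl_bern (sigmoid (\<theta> \<bullet> xs t)) (predictive TYPE('d) xs ys))"
    by (intro sum.cong refl) (auto simp: label_prob_def r_def)
  finally show ?thesis .
qed

lemma pointwise_bound:
  fixes \<theta> :: "real^'d::finite"
  assumes \<epsilon>: "0 < \<epsilon>"
  shows "(\<Sum>t<n. \<Sum>ys\<in>{ys. length ys = t}. likelihood \<theta> xs ys *
         kl_bern (sigmoid (\<theta> \<bullet> xs t)) (predictive TYPE('d) xs ys))
     \<le> \<epsilon>^2 / 8 * (\<Sum>t<n. \<Sum>i\<in>UNIV. (xs t $ i)^2) + Cth \<theta> \<epsilon>"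
  using per_theta_bound[OF \<epsilon>, where n=n and xs=xs and \<theta>=\<theta>] bayes_chain[where n=n and xs=xs and \<theta>=\<theta>]
  by simp

lemma nn_integral_superadd:
  "integral\<^sup>N M f + integral\<^sup>N M g \<le> (\<integral>\<^sup>+x. f x + g x \<partial>M)"
proof -
  let ?A = "{a. simple_function M a \<and> a \<le> f}"
  let ?B = "{b. simple_function M b \<and> b \<le> g}"
  have "(\<lambda>_. 0) \<in> ?A" by (auto simp: le_fun_def)
  then have A: "?A \<noteq> {}" by blast
  have "(\<lambda>_. 0) \<in> ?B" by (auto simp: le_fun_def)
  then have B: "?B \<noteq> {}" by blast
  have "integral\<^sup>N M f + integral\<^sup>N M g = (SUP a\<in>?A. integral\<^sup>S M a + integral\<^sup>N M g)"
    unfolding nn_integral_def[of M f] by (rule ennreal_SUP_add_left[symmetric, OF A])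
  also have "\<dots> \<le> (\<integral>\<^sup>+x. f x + g x \<partial>M)"
  proof (rule SUP_least)
    fix a assume a: "a \<in> ?A"
    have "integral\<^sup>S M a + integral\<^sup>N M g = (SUP b\<in>?B. integral\<^sup>S M a + integral\<^sup>S M b)"
      unfolding nn_integral_def[of M g] by (rule ennreal_SUP_add_right[OF B])
    also have "\<dots> \<le> (\<integral>\<^sup>+x. f x + g x \<partial>M)"
    proof (rule SUP_least)
      fix b assume b: "b \<in> ?B"
      have "integral\<^sup>S M a + integral\<^sup>S M b = integral\<^sup>S M (\<lambda>x. a x + b x)"
        using a b by (intro simple_integral_add[symmetric]) auto
      also have "\<dots> = (\<integral>\<^sup>+x. a x + b x \<partial>M)"
        using a b by (intro nn_integral_eq_simple_integral[symmetric]) auto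
      also have "\<dots> \<le> (\<integral>\<^sup>+x. f x + g x \<partial>M)"
        using a b by (intro nn_integral_mono add_mono) (auto simp: le_fun_def)
      finally show "integral\<^sup>S M a + integral\<^sup>S M b \<le> (\<integral>\<^sup>+x. f x + g x \<partial>M)" .
    qed
    finally show "integral\<^sup>S M a + integral\<^sup>N M g \<le> (\<integral>\<^sup>+x. f x + g x \<partial>M)" .
  qed
  finally show ?thesis .
qed

lemma nn_integral_sum_le:
  assumes "finite I"
  shows "(\<Sum>i\<in>I. integral\<^sup>N M (f i)) \<le> (\<integral>\<^sup>+x. (\<Sum>i\<in>I. f i x) \<partial>M)"
  using assms
proof (induction I rule: finite_induct)
  case empty then show ?case by simp
next
  case (insert i I)
  have "(\<Sum>j\<in>insert i I. integral\<^sup>N M (f j)) = integral\<^sup>N M (f i) + (\<Sum>j\<in>I. integral\<^sup>N M (f j))"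
    using insert by simp
  also have "\<dots> \<le> integral\<^sup>N M (f i) + (\<integral>\<^sup>+x. (\<Sum>j\<in>I. f j x) \<partial>M)"
    using insert by (intro add_left_mono) auto
  also have "\<dots> \<le> (\<integral>\<^sup>+x. f i x + (\<Sum>j\<in>I. f j x) \<partial>M)"
    by (rule nn_integral_superadd)
  also have "\<dots> = (\<integral>\<^sup>+x. (\<Sum>j\<in>insert i I. f j x) \<partial>M)"
    using insert by simp
  finally show ?case .
qed

lemma nn_integral_distr_le:
  assumes T: "T \<in> measurable M N"
  shows "integral\<^sup>N (distr M N T) f \<le> (\<integral>\<^sup>+x. f (T x) \<partial>M)"
  unfolding nn_integral_def[of "distr M N T" f]
proof (rule SUP_least)
  fix g assume g: "g \<in> {g. simple_function (distr M N T) g \<and> g \<le> f}"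
  then have gm: "g \<in> borel_measurable (distr M N T)"
    by (intro borel_measurable_simple_function) auto
  have "integral\<^sup>S (distr M N T) g = integral\<^sup>N (distr M N T) g"
    using g by (intro nn_integral_eq_simple_integral[symmetric]) auto
  also have "\<dots> = (\<integral>\<^sup>+x. g (T x) \<partial>M)"
    by (rule nn_integral_distr[OF T gm])
  also have "\<dots> \<le> (\<integral>\<^sup>+x. f (T x) \<partial>M)"
    using g by (intro nn_integral_mono) (auto simp: le_fun_def)
  finally show "integral\<^sup>S (distr M N T) g \<le> (\<integral>\<^sup>+x. f (T x) \<partial>M)" .
qed

definition fkl :: "'d itself \<Rightarrow> nat \<Rightarrow> real^'d::finite \<Rightarrow> (nat \<Rightarrow> real^'d) \<Rightarrow> ennreal" where
  "fkl D t \<theta> xs = (\<Sum>ys\<in>{ys :: bool list. length ys = t}.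
        ennreal (likelihood \<theta> xs ys * kl_bern (sigmoid (\<theta> \<bullet> xs t)) (predictive D xs ys)))"

lemma expected_kl_fkl: "expected_kl D t = (\<integral>\<^sup>+\<theta>. (\<integral>\<^sup>+xs. fkl D t \<theta> xs \<partial>inputs_law D t) \<partial>theta_prior D)"
  unfolding expected_kl_def fkl_def ..

lemma pred_bounds:
  "0 < predictive TYPE('d::finite) xs ys \<and> predictive TYPE('d) xs ys < 1"
proof -
  let ?\<pi> = "gvec (0::real^'d) (1 / sqrt (real CARD('d)))"
  have s: "0 < 1 / sqrt (real CARD('d))" by simp
  have prob: "prob_space ?\<pi>" by (rule prob_space_gvec[OF s])
  let ?M = "(\<integral>\<theta>'. likelihood \<theta>' xs ys \<partial>?\<pi>)"
  let ?I = "(\<integral>\<theta>'. likelihood \<theta>' xs ys * sigmoid (\<theta>' \<bullet> xs (length ys)) \<partial>?\<pi>)"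
  have pred_eq: "predictive TYPE('d) xs ys = ?I / ?M"
    unfolding predictive_def theta_prior_gvec ..
  have iL: "integrable ?\<pi> (\<lambda>\<theta>'. likelihood \<theta>' xs ys)"
    using integrable_likelihood_gvec[OF s, of 0 xs ys 1] by simp
  have iLs: "integrable ?\<pi> (\<lambda>\<theta>'. likelihood \<theta>' xs ys * sigmoid (\<theta>' \<bullet> xs (length ys)))"
  proof (rule integrable_gvec_bounded[OF s _, of _ 1])
    show "(\<lambda>\<theta>'. likelihood \<theta>' xs ys * sigmoid (\<theta>' \<bullet> xs (length ys))) \<in> borel_measurable borel" by measurable
    fix x :: "real^'d"
    show "\<bar>likelihood x xs ys * sigmoid (x \<bullet> xs (length ys))\<bar> \<le> 1"
      using likelihood_pos[of x xs ys] likelihood_le1[of x xs ys] sigmoid_pos[of "x \<bullet> xs (length ys)"]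
        sigmoid_lt1[of "x \<bullet> xs (length ys)"]
      by (simp add: abs_mult mult_le_one)
  qed
  have iLs': "integrable ?\<pi> (\<lambda>\<theta>'. likelihood \<theta>' xs ys * (1 - sigmoid (\<theta>' \<bullet> xs (length ys))))"
    using Bochner_Integration.integrable_diff[OF iL iLs] by (simp add: right_diff_distrib)
  have Mpos: "0 < ?M" by (rule pos_integral[OF prob iL]) (simp add: likelihood_pos)
  have Ipos: "0 < ?I" by (rule pos_integral[OF prob iLs]) (simp add: likelihood_pos sigmoid_pos)
  have Ipos': "0 < (\<integral>\<theta>'. likelihood \<theta>' xs ys * (1 - sigmoid (\<theta>' \<bullet> xs (length ys))) \<partial>?\<pi>)"
    by (rule pos_integral[OF prob iLs']) (simp add: likelihood_pos sigmoid_lt1)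
  have Idiff: "(\<integral>\<theta>'. likelihood \<theta>' xs ys * (1 - sigmoid (\<theta>' \<bullet> xs (length ys))) \<partial>?\<pi>) = ?M - ?I"
    using Bochner_Integration.integral_diff[OF iL iLs] by (simp add: right_diff_distrib)
  have "?I < ?M" using Ipos' Idiff by linarith
  then show ?thesis unfolding pred_eq using Mpos Ipos by (simp add: divide_less_eq)
qed

lemma likelihood_restrict:
  "length ys \<le> t \<Longrightarrow> likelihood \<theta> (restrict xs {..t}) ys = likelihood \<theta> xs ys"
  unfolding likelihood_def by (intro prod.cong refl) auto

lemma predictive_restrict:
  "length ys \<le> t \<Longrightarrow> predictive D (restrict xs {..t}) ys = predictive D xs ys"
  unfolding predictive_def by (simp add: likelihood_restrict)

lemma fkl_restrict: "fkl D t \<theta> (restrict xs {..t}) = fkl D t \<theta> xs"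
  unfolding fkl_def by (intro sum.cong refl) (simp add: likelihood_restrict predictive_restrict)

lemma fkl_bound:
  fixes \<theta> :: "real^'d::finite"
  assumes \<epsilon>: "0 < \<epsilon>"
  shows "(\<Sum>t<n. fkl TYPE('d) t \<theta> xs) \<le> ennreal (\<epsilon>^2 / 8 * (\<Sum>t<n. \<Sum>i\<in>UNIV. (xs t $ i)^2) + Cth \<theta> \<epsilon>)"
proof -
  have nn: "0 \<le> likelihood \<theta> xs ys * kl_bern (sigmoid (\<theta> \<bullet> xs t)) (predictive TYPE('d) xs ys)" for ys t
    using likelihood_pos[of \<theta> xs ys] pred_bounds[of xs ys] sigmoid_pos sigmoid_lt1
    by (intro mult_nonneg_nonneg kl_bern_nonneg) (auto intro: less_imp_le)
  have "(\<Sum>t<n. fkl TYPE('d) t \<theta> xs) = (\<Sum>t<n. ennreal (\<Sum>ys\<in>{ys. length ys = t}.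
      likelihood \<theta> xs ys * kl_bern (sigmoid (\<theta> \<bullet> xs t)) (predictive TYPE('d) xs ys)))"
    unfolding fkl_def using nn by (simp add: sum_ennreal)
  also have "\<dots> = ennreal (\<Sum>t<n. \<Sum>ys\<in>{ys. length ys = t}.
      likelihood \<theta> xs ys * kl_bern (sigmoid (\<theta> \<bullet> xs t)) (predictive TYPE('d) xs ys))"
    using nn by (simp add: sum_ennreal sum_nonneg)
  also have "\<dots> \<le> ennreal (\<epsilon>^2 / 8 * (\<Sum>t<n. \<Sum>i\<in>UNIV. (xs t $ i)^2) + Cth \<theta> \<epsilon>)"
    by (rule ennreal_leI) (rule pointwise_bound[OF \<epsilon>])
  finally show ?thesis .
qed

lemma input_prob: "prob_space (input_law TYPE('d::finite))"
  unfolding input_law_gvec by (rule prob_space_gvec) simp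

lemma sets_input_law[simp, measurable_cong]: "sets (input_law TYPE('d::finite)) = sets borel"
  unfolding input_law_gvec by simp

lemma input_product: "product_prob_space (\<lambda>_::nat. input_law TYPE('d::finite))"
proof -
  have p: "prob_space (input_law TYPE('d))" by (rule input_prob)
  show ?thesis unfolding product_prob_space_def product_prob_space_axioms_def product_sigma_finite_def
    using p by (simp add: prob_space_imp_sigma_finite)
qed

lemma comp_integral:
  fixes g :: "real^'d::finite \<Rightarrow> real"
  assumes t: "t \<in> I" and gm: "g \<in> borel_measurable borel" and gi: "integrable (input_law TYPE('d)) g"
  shows "integrable (PiM I (\<lambda>_. input_law TYPE('d))) (\<lambda>xs. g (xs t))"
    "integral\<^sup>L (PiM I (\<lambda>_. input_law TYPE('d))) (\<lambda>xs. g (xs t)) = integral\<^sup>L (input_law TYPE('d)) g"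
proof -
  have D: "distr (PiM I (\<lambda>_. input_law TYPE('d))) (input_law TYPE('d)) (\<lambda>\<omega>. \<omega> t) = input_law TYPE('d)"
    using distr_PiM_component[of I "\<lambda>_. input_law TYPE('d)" t] input_prob t by simp
  have m: "(\<lambda>\<omega>. \<omega> t) \<in> measurable (PiM I (\<lambda>_. input_law TYPE('d))) (input_law TYPE('d))"
    using measurable_component_singleton[OF t, of "\<lambda>_. input_law TYPE('d)"] by simp
  have gm': "g \<in> borel_measurable (input_law TYPE('d))" using gm by (simp cong: measurable_cong_sets)
  show "integrable (PiM I (\<lambda>_. input_law TYPE('d))) (\<lambda>xs. g (xs t))"
    using integrable_distr_eq[OF m gm'] gi D by simp
  show "integral\<^sup>L (PiM I (\<lambda>_. input_law TYPE('d))) (\<lambda>xs. g (xs t)) = integral\<^sup>L (input_law TYPE('d)) g"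
    using integral_distr[OF m gm'] D by simp
qed

lemma input_sq:
  "integrable (input_law TYPE('d::finite)) (\<lambda>x. (x$i)^2)" "integral\<^sup>L (input_law TYPE('d)) (\<lambda>x. (x$i)^2) = 1"
  using gvec_c2[of 1 "0::real^'d" i] unfolding input_law_gvec by simp_all

lemma xs_integral:
  assumes c: "0 \<le> c" and a: "0 \<le> a"
  shows "(\<integral>\<^sup>+xs. ennreal (a * (\<Sum>t<T. \<Sum>i\<in>UNIV. (xs t $ i)^2) + c) \<partial>PiM {..T} (\<lambda>_. input_law TYPE('d::finite)))
     = ennreal (a * (real T * real CARD('d)) + c)" (is "?L = _")
proof -
  let ?P = "PiM {..T} (\<lambda>_. input_law TYPE('d))"
  interpret P: product_prob_space "\<lambda>_::nat. input_law TYPE('d)" "{..T}" by (rule input_product)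
  have i1: "integrable ?P (\<lambda>xs. (xs t $ i)^2)" if "t < T" for t and i :: 'd
    using comp_integral(1)[of t "{..T}" "\<lambda>x. (x$i)^2", OF _ _ input_sq(1)] that by simp
  have v1: "integral\<^sup>L ?P (\<lambda>xs. (xs t $ i)^2) = 1" if "t < T" for t and i :: 'd
    using comp_integral(2)[of t "{..T}" "\<lambda>x. (x$i)^2", OF _ _ input_sq(1)] input_sq(2) that by simp
  have iS: "integrable ?P (\<lambda>xs. \<Sum>t<T. \<Sum>i\<in>UNIV. (xs t $ i)^2)"
    using i1 by (intro Bochner_Integration.integrable_sum) auto
  have vS: "integral\<^sup>L ?P (\<lambda>xs. \<Sum>t<T. \<Sum>i\<in>UNIV. (xs t $ i)^2) = real T * real CARD('d)"
  proof -
    have "integral\<^sup>L ?P (\<lambda>xs. \<Sum>t<T. \<Sum>i\<in>UNIV. (xs t $ i)^2) = (\<Sum>t<T. integral\<^sup>L ?P (\<lambda>xs. \<Sum>i\<in>UNIV. (xs t $ i)^2))"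
      using i1 by (intro Bochner_Integration.integral_sum Bochner_Integration.integrable_sum) auto
    also have "\<dots> = (\<Sum>t<T. \<Sum>i\<in>(UNIV::'d set). 1)"
    proof (intro sum.cong refl)
      fix t assume "t \<in> {..<T}"
      then show "integral\<^sup>L ?P (\<lambda>xs. \<Sum>i\<in>UNIV. (xs t $ i)^2) = (\<Sum>i\<in>(UNIV::'d set). 1)"
        using i1 v1 by (subst Bochner_Integration.integral_sum) auto
    qed
    finally show ?thesis by simp
  qed
  have iG: "integrable ?P (\<lambda>xs. a * (\<Sum>t<T. \<Sum>i\<in>UNIV. (xs t $ i)^2) + c)"
    by (rule Bochner_Integration.integrable_add[OF integrable_mult_right[OF iS]]) simp
  have "?L = integral\<^sup>L ?P (\<lambda>xs. a * (\<Sum>t<T. \<Sum>i\<in>UNIV. (xs t $ i)^2) + c)"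
  proof (rule nn_integral_eq_integral[OF iG])
    show "AE xs in ?P. 0 \<le> a * (\<Sum>t<T. \<Sum>i\<in>UNIV. (xs t $ i)^2) + c"
      by (intro AE_I2 add_nonneg_nonneg mult_nonneg_nonneg sum_nonneg a c) auto
  qed
  also have "\<dots> = a * (real T * real CARD('d)) + c"
    using iS vS P.P.prob_space by (simp add: space_PiM)
  finally show ?thesis by simp
qed

lemma Cth_nonneg:
  assumes "0 < \<epsilon>"
  shows "0 \<le> Cth (\<theta>::real^'d::finite) \<epsilon>"
  unfolding Cth_def
proof (rule sum_nonneg)
  fix i
  let ?d = "real CARD('d)"
  have u: "0 < ?d * \<epsilon>^2" using assms by simp
  have l: "ln (?d * \<epsilon>^2) \<le> ?d * \<epsilon>^2 - 1" by (rule ln_le_minus_one[OF u])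
  have h1: "0 \<le> (?d * \<epsilon>^2 - 1 - ln (?d * \<epsilon>^2)) / 2" using l by simp
  have h2: "0 \<le> ?d * (\<theta>$i)^2 / 2" by simp
  have eq: "?d * ((\<theta>$i)^2 + \<epsilon>^2) / 2 - 1/2 - ln (?d * \<epsilon>^2) / 2
      = (?d * \<epsilon>^2 - 1 - ln (?d * \<epsilon>^2)) / 2 + ?d * (\<theta>$i)^2 / 2"
    by (simp add: field_simps)
  show "0 \<le> ?d * ((\<theta>$i)^2 + \<epsilon>^2) / 2 - 1/2 - ln (?d * \<epsilon>^2) / 2"
    unfolding eq by (rule add_nonneg_nonneg[OF h1 h2])
qed

lemma theta_integral:
  assumes K: "0 \<le> K" and \<epsilon>: "0 < \<epsilon>"
  shows "(\<integral>\<^sup>+\<theta>. ennreal (K + Cth \<theta> \<epsilon>) \<partial>theta_prior TYPE('d::finite))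
    = ennreal (K + real CARD('d) * (real CARD('d) * \<epsilon>^2 - ln (real CARD('d) * \<epsilon>^2)) / 2)"
proof -
  let ?d = "real CARD('d)"
  let ?s = "1 / sqrt ?d"
  let ?\<pi> = "gvec (0::real^'d) ?s"
  have s: "0 < ?s" by simp
  define c0 where "c0 = ?d * \<epsilon>^2 / 2 - 1/2 - ln (?d * \<epsilon>^2) / 2"
  have Ceq: "Cth \<theta> \<epsilon> = (\<Sum>i\<in>UNIV. ?d / 2 * (\<theta>$i - (0::real^'d)$i)^2 + c0)" for \<theta> :: "real^'d"
    unfolding Cth_def c0_def by (intro sum.cong refl) (simp add: field_simps)
  have iC: "integrable ?\<pi> (\<lambda>\<theta>. ?d / 2 * (\<theta>$i - (0::real^'d)$i)^2 + c0)" for i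
    by (rule Bochner_Integration.integrable_add[OF integrable_mult_right[OF gvec_c2(1)[OF s]] gvec_const(1)[OF s]])
  have vC: "integral\<^sup>L ?\<pi> (\<lambda>\<theta>. ?d / 2 * (\<theta>$i - (0::real^'d)$i)^2 + c0) = 1/2 + c0" for i
  proof -
    have e1: "integral\<^sup>L ?\<pi> (\<lambda>\<theta>. (\<theta>$i - (0::real^'d)$i)^2) = ?s^2" by (rule gvec_c2(2)[OF s])
    have i2: "integrable ?\<pi> (\<lambda>\<theta>. (\<theta>$i - (0::real^'d)$i)^2)" by (rule gvec_c2(1)[OF s])
    have "integral\<^sup>L ?\<pi> (\<lambda>\<theta>. ?d / 2 * (\<theta>$i - (0::real^'d)$i)^2 + c0)
        = integral\<^sup>L ?\<pi> (\<lambda>\<theta>. ?d / 2 * (\<theta>$i - (0::real^'d)$i)^2) + integral\<^sup>L ?\<pi> (\<lambda>\<theta>. c0)"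
      by (rule Bochner_Integration.integral_add[OF integrable_mult_right[OF i2] gvec_const(1)[OF s]])
    also have "integral\<^sup>L ?\<pi> (\<lambda>\<theta>. ?d / 2 * (\<theta>$i - (0::real^'d)$i)^2) = ?d / 2 * ?s^2"
      using e1 by (simp only: integral_mult_right_zero)
    also have "integral\<^sup>L ?\<pi> (\<lambda>\<theta>. c0) = c0" by (rule gvec_const(2)[OF s])
    also have "?d / 2 * ?s^2 = 1/2" by (simp add: power_divide)
    finally show ?thesis .
  qed
  have iCth: "integrable ?\<pi> (\<lambda>\<theta>. Cth \<theta> \<epsilon>)"
    unfolding Ceq by (intro Bochner_Integration.integrable_sum iC)
  have iS: "integrable ?\<pi> (\<lambda>\<theta>. K + Cth \<theta> \<epsilon>)"
    by (rule Bochner_Integration.integrable_add[OF gvec_const(1)[OF s] iCth])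
  have "(\<integral>\<^sup>+\<theta>. ennreal (K + Cth \<theta> \<epsilon>) \<partial>theta_prior TYPE('d)) = integral\<^sup>L ?\<pi> (\<lambda>\<theta>. K + Cth \<theta> \<epsilon>)"
    unfolding theta_prior_gvec
    by (rule nn_integral_eq_integral[OF iS]) (intro AE_I2 add_nonneg_nonneg K Cth_nonneg[OF \<epsilon>])
  also have "\<dots> = K + (\<Sum>i\<in>(UNIV::'d set). 1/2 + c0)"
  proof -
    have "integral\<^sup>L ?\<pi> (\<lambda>\<theta>. K + Cth \<theta> \<epsilon>) = integral\<^sup>L ?\<pi> (\<lambda>\<theta>. K) + integral\<^sup>L ?\<pi> (\<lambda>\<theta>. Cth \<theta> \<epsilon>)"
      by (rule Bochner_Integration.integral_add[OF gvec_const(1)[OF s] iCth])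
    also have "integral\<^sup>L ?\<pi> (\<lambda>\<theta>. Cth \<theta> \<epsilon>) = (\<Sum>i\<in>(UNIV::'d set). 1/2 + c0)"
      unfolding Ceq using iC vC by (subst Bochner_Integration.integral_sum) auto
    moreover have "measure ?\<pi> UNIV = 1" using prob_space.prob_space[OF prob_space_gvec[OF s]] by simp
    ultimately show ?thesis by simp
  qed
  also have "K + (\<Sum>i\<in>(UNIV::'d set). 1/2 + c0) = K + ?d * (?d * \<epsilon>^2 - ln (?d * \<epsilon>^2)) / 2"
    unfolding c0_def by (simp add: field_simps)
  finally show ?thesis .
qed

lemma theta_sum_bound:
  fixes \<theta> :: "real^'d::finite"
  assumes \<epsilon>: "0 < \<epsilon>"
  shows "(\<Sum>t<T. \<integral>\<^sup>+xs. fkl TYPE('d) t \<theta> xs \<partial>inputs_law TYPE('d) t)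
     \<le> ennreal (\<epsilon>^2 / 8 * (real T * real CARD('d)) + Cth \<theta> \<epsilon>)"
proof -
  let ?P = "PiM {..T} (\<lambda>_. input_law TYPE('d))"
  interpret P: product_prob_space "\<lambda>_::nat. input_law TYPE('d)" "{..T}" by (rule input_product)
  have step: "(\<integral>\<^sup>+xs. fkl TYPE('d) t \<theta> xs \<partial>inputs_law TYPE('d) t) \<le> (\<integral>\<^sup>+xs. fkl TYPE('d) t \<theta> xs \<partial>?P)"
    if t: "t < T" for t
  proof -
    have eq: "inputs_law TYPE('d) t = distr ?P (PiM {..t} (\<lambda>_. input_law TYPE('d))) (\<lambda>x. restrict x {..t})"
      unfolding inputs_law_def by (rule P.distr_PiM_restrict_finite[symmetric]) (use t in auto)
    have "(\<integral>\<^sup>+xs. fkl TYPE('d) t \<theta> xs \<partial>inputs_law TYPE('d) t) \<le> (\<integral>\<^sup>+xs. fkl TYPE('d) t \<theta> (restrict xs {..t}) \<partial>?P)"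
      unfolding eq by (rule nn_integral_distr_le[OF measurable_restrict_subset]) (use t in auto)
    also have "\<dots> = (\<integral>\<^sup>+xs. fkl TYPE('d) t \<theta> xs \<partial>?P)"
      by (simp add: fkl_restrict)
    finally show ?thesis .
  qed
  have "(\<Sum>t<T. \<integral>\<^sup>+xs. fkl TYPE('d) t \<theta> xs \<partial>inputs_law TYPE('d) t) \<le> (\<Sum>t<T. \<integral>\<^sup>+xs. fkl TYPE('d) t \<theta> xs \<partial>?P)"
    by (rule sum_mono) (use step in auto)
  also have "\<dots> \<le> (\<integral>\<^sup>+xs. (\<Sum>t<T. fkl TYPE('d) t \<theta> xs) \<partial>?P)"
    by (rule nn_integral_sum_le) simp
  also have "\<dots> \<le> (\<integral>\<^sup>+xs. ennreal (\<epsilon>^2 / 8 * (\<Sum>t<T. \<Sum>i\<in>UNIV. (xs t $ i)^2) + Cth \<theta> \<epsilon>) \<partial>?P)"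
    by (rule nn_integral_mono) (rule fkl_bound[OF \<epsilon>])
  also have "\<dots> = ennreal (\<epsilon>^2 / 8 * (real T * real CARD('d)) + Cth \<theta> \<epsilon>)"
    by (rule xs_integral) (use Cth_nonneg[OF \<epsilon>] in auto)
  finally show ?thesis .
qed

lemma total_bound:
  assumes \<epsilon>: "0 < \<epsilon>"
  shows "(\<Sum>t<T. expected_kl TYPE('d::finite) t)
     \<le> ennreal (\<epsilon>^2 / 8 * (real T * real CARD('d))
          + real CARD('d) * (real CARD('d) * \<epsilon>^2 - ln (real CARD('d) * \<epsilon>^2)) / 2)"
proof -
  have "(\<Sum>t<T. expected_kl TYPE('d) t)
      = (\<Sum>t<T. \<integral>\<^sup>+\<theta>. (\<integral>\<^sup>+xs. fkl TYPE('d) t \<theta> xs \<partial>inputs_law TYPE('d) t) \<partial>theta_prior TYPE('d))"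
    by (simp add: expected_kl_fkl)
  also have "\<dots> \<le> (\<integral>\<^sup>+\<theta>. (\<Sum>t<T. \<integral>\<^sup>+xs. fkl TYPE('d) t \<theta> xs \<partial>inputs_law TYPE('d) t) \<partial>theta_prior TYPE('d))"
    by (rule nn_integral_sum_le) simp
  also have "\<dots> \<le> (\<integral>\<^sup>+\<theta>. ennreal (\<epsilon>^2 / 8 * (real T * real CARD('d)) + Cth \<theta> \<epsilon>) \<partial>theta_prior TYPE('d))"
    by (rule nn_integral_mono) (rule theta_sum_bound[OF \<epsilon>])
  also have "\<dots> = ennreal (\<epsilon>^2 / 8 * (real T * real CARD('d))
          + real CARD('d) * (real CARD('d) * \<epsilon>^2 - ln (real CARD('d) * \<epsilon>^2)) / 2)"
    by (rule theta_integral) (use \<epsilon> in auto)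
  finally show ?thesis .
qed

lemma arith_opt:
  fixes d T :: real
  assumes d: "0 < d" and T: "0 < T"
  defines "\<epsilon> \<equiv> sqrt (4 / (4 * d + T))"
  shows "0 < \<epsilon>"
    and "\<epsilon>^2 / 8 * (T * d) + d * (d * \<epsilon>^2 - ln (d * \<epsilon>^2)) / 2 = d / 2 * (1 + ln (1 + T / (4 * d)))"
proof -
  have p: "0 < 4 * d + T" using d T by simp
  show "0 < \<epsilon>" unfolding \<epsilon>_def using p by simp
  have e2: "\<epsilon>^2 = 4 / (4 * d + T)" unfolding \<epsilon>_def using p by simp
  have de: "d * \<epsilon>^2 = 1 / (1 + T / (4 * d))" unfolding e2 using d p by (simp add: field_simps)
  have q: "0 < 1 + T / (4 * d)" using d T by (simp add: add_pos_nonneg)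
  have l: "ln (d * \<epsilon>^2) = - ln (1 + T / (4 * d))" unfolding de using q by (simp add: ln_div)
  have a: "\<epsilon>^2 / 8 * (T * d) + d * (d * \<epsilon>^2) / 2 = d / 2"
  proof -
    have "\<epsilon>^2 / 8 * (T * d) + d * (d * \<epsilon>^2) / 2 = \<epsilon>^2 * (4 * d + T) * (d / 8)"
      by (simp add: algebra_simps)
    also have "\<epsilon>^2 * (4 * d + T) = 4"
    proof -
      have ne: "4 * d + T \<noteq> 0" using p by simp
      show ?thesis unfolding e2 using ne by (simp add: field_simps)
    qed
    finally show ?thesis by simp
  qed
  show "\<epsilon>^2 / 8 * (T * d) + d * (d * \<epsilon>^2 - ln (d * \<epsilon>^2)) / 2 = d / 2 * (1 + ln (1 + T / (4 * d)))"
    using a unfolding l by (simp add: field_simps)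
qed

theorem mainTheorem8:
  fixes T :: nat
  assumes "T > 0"
  shows "estimation_error TYPE('d::finite) T
           \<le> ennreal (real CARD('d) / (2 * real T)
                 * (1 + ln (1 + real T / (4 * real CARD('d)))))"
proof -
  let ?d = "real CARD('d)"
  define \<epsilon> where "\<epsilon> = sqrt (4 / (4 * ?d + real T))"
  have d: "0 < ?d" by simp
  have Tp: "0 < real T" using assms by simp
  note opt = arith_opt[OF d Tp, folded \<epsilon>_def]
  define B where "B = ?d / 2 * (1 + ln (1 + real T / (4 * ?d)))"
  have B0: "0 \<le> B" unfolding B_def using d Tp by (intro mult_nonneg_nonneg) (auto simp: add_nonneg_nonneg)
  have tb: "(\<Sum>t<T. expected_kl TYPE('d) t) \<le> ennreal (\<epsilon>^2 / 8 * (real T * ?d) + ?d * (?d * \<epsilon>^2 - ln (?d * \<epsilon>^2)) / 2)"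
    by (rule total_bound[OF opt(1)])
  have tot: "(\<Sum>t<T. expected_kl TYPE('d) t) \<le> ennreal B"
    using tb unfolding opt(2) B_def .
  have "estimation_error TYPE('d) T = ennreal (1 / real T) * (\<Sum>t<T. expected_kl TYPE('d) t)"
    unfolding estimation_error_def ..
  also have "\<dots> \<le> ennreal (1 / real T) * ennreal B"
    by (rule mult_left_mono[OF tot]) simp
  also have "\<dots> = ennreal (1 / real T * B)"
    by (rule ennreal_mult[symmetric]) (use B0 Tp in auto)
  also have "1 / real T * B = ?d / (2 * real T) * (1 + ln (1 + real T / (4 * ?d)))"
    unfolding B_def using Tp by (simp add: field_simps)
  finally show ?thesis .
qed

end
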